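(* Let $M$ be the statistical manifold of the beta-logistic distributions $$p(x;\theta^1,\theta^2)=\frac{2^{1-\theta^1}\operatorname{sech}^{\theta^1}(x)\,e^{\theta^2x}}{B\left(\frac{\theta^1-\theta^2}{2},\frac{\theta^1+\theta^2}{2}\right)},\qquad x\in\mathbb{R},\quad (\theta^1,\theta^2)\in\Theta=\{\theta^1\pm\theta^2>0\}.$$ Write $a=\frac{\theta^1-\theta^2}{2}$, $b=\frac{\theta^1+\theta^2}{2}$, $p=\psi'(a)$, $q=\psi'(b)$, $r=\psi'(\theta^1)$, $s=\psi''(a)$, $u=\psi''(b)$, $v=\psi''(\theta^1)$, and set $$\mathcal{G}=pq-r(p+q),\qquad N=rsu-v(qs+pu).$$ Then for every $\alpha\in\mathbb{R}$: (1) the $\alpha$-connection coefficients are $$\Gamma^{(\alpha)}_{111}=\tfrac{1-\alpha}{16}\,(u+s-8v),\qquad \Gamma^{(\alpha)}_{121}=\Gamma^{(\alpha)}_{112}=\Gamma^{(\alpha)}_{211}=\Gamma^{(\alpha)}_{222}=\tfrac{1-\alpha}{16}\,(u-s),$$ $$\Gamma^{(\alpha)}_{122}=\Gamma^{(\alpha)}_{212}=\Gamma^{(\alpha)}_{221}=\tfrac{1-\alpha}{16}\,(u+s);$$ (2) the components $R^{(\alpha)}_{ijkl}$ of the $\alpha$-curvature tensor with $i=j$ or $k=l$ vanish, and $$R^{(\alpha)}_{1212}=R^{(\alpha)}_{2121}=-R^{(\alpha)}_{1221}=-R^{(\alpha)}_{2112}=\frac{(1-\alpha^2)\,N}{16\,\mathcal{G}};$$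 (3) the $\alpha$-Ricci curvature components are $$R^{(\alpha)}_{11}=\frac{(1-\alpha^2)(p+q-4r)\,N}{16\,\mathcal{G}^2},\quad R^{(\alpha)}_{12}=R^{(\alpha)}_{21}=-\frac{(1-\alpha^2)(p-q)\,N}{16\,\mathcal{G}^2},\quad R^{(\alpha)}_{22}=\frac{(1-\alpha^2)(p+q)\,N}{16\,\mathcal{G}^2};$$ (4) the $\alpha$-scalar curvature is $R^{(\alpha)}=8R^{(\alpha)}_{1212}/\mathcal{G}$, which equals $2K^{(\alpha)}$ where $K^{(\alpha)}=R^{(\alpha)}_{1212}/\det G$.
   Context: $B$ is the beta function, $\psi=\Gamma'/\Gamma$ the digamma function, $\psi',\psi''$ its first and second derivatives. Let $l=\ln p(x;\theta)$, $\partial_i=\partial/\partial\theta^i$. The Fisher metric is $g_{ij}=\mathbb{E}[\partial_il\,\partial_jl]$, $G=(g_{ij})$, $(g^{ij})=G^{-1}$; $T_{ijk}=\mathbb{E}[\partial_il\,\partial_jl\,\partial_kl]$. The Levi-Civita coefficients are $\Gamma_{ijk}=\frac12(\partial_ig_{jk}+\partial_jg_{ki}-\partial_kg_{ij})$, the $\alpha$-connection coefficients are $\Gamma^{(\alpha)}_{ijk}=\Gamma_{ijk}-\frac{\alpha}{2}T_{ijk}$, and $\Gamma^{(\alpha)k}_{ij}=\Gamma^{(\alpha)}_{ijs}g^{sk}$ (summation convention), defining the connection $\nabla^{(\alpha)}_{\partial_i}\partial_j=\Gamma^{(\alpha)k}_{ij}\partial_k$. The $\alpha$-curvature tensor is $R^{(\alpha)}_{ijkl}=g\big(R^{(\alpha)}(\partial_i,\partial_j)\partial_k,\partial_l\big)$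 with $R^{(\alpha)}(X,Y)=\nabla^{(\alpha)}_X\nabla^{(\alpha)}_Y-\nabla^{(\alpha)}_Y\nabla^{(\alpha)}_X-\nabla^{(\alpha)}_{[X,Y]}$ (for this family it equals $\frac{1-\alpha^2}{4}g^{mn}(T_{kmi}T_{jln}-T_{kmj}T_{iln})$). The $\alpha$-Ricci curvature is $R^{(\alpha)}_{ik}=R^{(\alpha)}_{ijkl}g^{jl}$ and the $\alpha$-scalar curvature is $R^{(\alpha)}=R^{(\alpha)}_{ij}g^{ij}$. *)

theory Defs
  imports "HOL-Analysis.Analysis"
begin

definition idx :: "nat set" where "idx = {1, 2}"

definition comp :: "nat \<Rightarrow> real \<times> real \<Rightarrow> real" where
  "comp i \<theta> = (if i = 1 then fst \<theta> else snd \<theta>)"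

definition upd :: "nat \<Rightarrow> real \<Rightarrow> real \<times> real \<Rightarrow> real \<times> real" where
  "upd i t \<theta> = (if i = 1 then (t, snd \<theta>) else (fst \<theta>, t))"

definition pd :: "nat \<Rightarrow> (real \<times> real \<Rightarrow> real) \<Rightarrow> real \<times> real \<Rightarrow> real" where
  "pd i f \<theta> = deriv (\<lambda>t. f (upd i t \<theta>)) (comp i \<theta>)"

definition Theta :: "(real \<times> real) set" where
  "Theta = {\<theta>. fst \<theta> - snd \<theta> > 0 \<and> fst \<theta> + snd \<theta> > 0}"

definition sech :: "real \<Rightarrow> real" where "sech x = 1 / cosh x"

definition dens :: "real \<times> real \<Rightarrow> real \<Rightarrow> real" where
  "dens \<theta> x = 2 powr (1 - fst \<theta>) * sech x powr (fst \<theta>) * exp (snd \<theta> * x)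
     / Beta ((fst \<theta> - snd \<theta>) / 2) ((fst \<theta> + snd \<theta>) / 2)"

definition loglik :: "real \<times> real \<Rightarrow> real \<Rightarrow> real" where
  "loglik \<theta> x = ln (dens \<theta> x)"

definition score :: "nat \<Rightarrow> real \<times> real \<Rightarrow> real \<Rightarrow> real" where
  "score i \<theta> x = pd i (\<lambda>\<eta>. loglik \<eta> x) \<theta>"

definition fisher :: "nat \<Rightarrow> nat \<Rightarrow> real \<times> real \<Rightarrow> real" where
  "fisher i j \<theta> = (\<integral>x. score i \<theta> x * score j \<theta> x * dens \<theta> x \<partial>lborel)"

definition skew :: "nat \<Rightarrow> nat \<Rightarrow> nat \<Rightarrow> real \<times> real \<Rightarrow> real" where
  "skew i j k \<theta> = (\<integral>x. score i \<theta> x * score j \<theta> x * score k \<theta> x * dens \<theta> x \<partial>lborel)"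

definition fisher_det :: "real \<times> real \<Rightarrow> real" where
  "fisher_det \<theta> = fisher 1 1 \<theta> * fisher 2 2 \<theta> - fisher 1 2 \<theta> * fisher 2 1 \<theta>"

definition fisher_inv :: "nat \<Rightarrow> nat \<Rightarrow> real \<times> real \<Rightarrow> real" where
  "fisher_inv i j \<theta> =
     (if i = 1 \<and> j = 1 then fisher 2 2 \<theta>
      else if i = 2 \<and> j = 2 then fisher 1 1 \<theta>
      else - fisher i j \<theta>) / fisher_det \<theta>"

definition LC :: "nat \<Rightarrow> nat \<Rightarrow> nat \<Rightarrow> real \<times> real \<Rightarrow> real" where
  "LC i j k \<theta> = (pd i (fisher j k) \<theta> + pd j (fisher k i) \<theta> - pd k (fisher i j) \<theta>) / 2"

definition conn :: "real \<Rightarrow> nat \<Rightarrow> nat \<Rightarrow> nat \<Rightarrow> real \<times> real \<Rightarrow> real" where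
  "conn \<alpha> i j k \<theta> = LC i j k \<theta> - \<alpha> / 2 * skew i j k \<theta>"

definition conn_up :: "real \<Rightarrow> nat \<Rightarrow> nat \<Rightarrow> nat \<Rightarrow> real \<times> real \<Rightarrow> real" where
  "conn_up \<alpha> i j k \<theta> = (\<Sum>s\<in>idx. conn \<alpha> i j s \<theta> * fisher_inv s k \<theta>)"

text \<open>Component n of R(d_i,d_j)d_k = nabla_i nabla_j d_k - nabla_j nabla_i d_k
  (coordinate fields commute), where nabla_i d_j = Gamma^m_ij d_m.\<close>
definition curv_up :: "real \<Rightarrow> nat \<Rightarrow> nat \<Rightarrow> nat \<Rightarrow> nat \<Rightarrow> real \<times> real \<Rightarrow> real" where
  "curv_up \<alpha> i j k n \<theta> =
     pd i (conn_up \<alpha> j k n) \<theta> - pd j (conn_up \<alpha> i k n) \<theta>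
     + (\<Sum>m\<in>idx. conn_up \<alpha> j k m \<theta> * conn_up \<alpha> i m n \<theta>
                 - conn_up \<alpha> i k m \<theta> * conn_up \<alpha> j m n \<theta>)"

definition curv :: "real \<Rightarrow> nat \<Rightarrow> nat \<Rightarrow> nat \<Rightarrow> nat \<Rightarrow> real \<times> real \<Rightarrow> real" where
  "curv \<alpha> i j k l \<theta> = (\<Sum>n\<in>idx. curv_up \<alpha> i j k n \<theta> * fisher n l \<theta>)"

definition ricci :: "real \<Rightarrow> nat \<Rightarrow> nat \<Rightarrow> real \<times> real \<Rightarrow> real" where
  "ricci \<alpha> i k \<theta> = (\<Sum>j\<in>idx. \<Sum>l\<in>idx. curv \<alpha> i j k l \<theta> * fisher_inv j l \<theta>)"

definition scalar_curv :: "real \<Rightarrow> real \<times> real \<Rightarrow> real" where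
  "scalar_curv \<alpha> \<theta> = (\<Sum>i\<in>idx. \<Sum>j\<in>idx. ricci \<alpha> i j \<theta> * fisher_inv i j \<theta>)"

end

theory Submission
  imports Defs "HOL-Real_Asymp.Real_Asymp"
begin

definition ca :: "nat \<Rightarrow> real" where "ca i = (if i = 1 then 1/2 else -1/2)"
definition cb :: "nat \<Rightarrow> real" where "cb i = 1/2"
definition cc :: "nat \<Rightarrow> real" where "cc i = (if i = 1 then 1 else 0)"
definition aa :: "real \<times> real \<Rightarrow> real" where "aa \<theta> = (fst \<theta> - snd \<theta>) / 2"
definition bb :: "real \<times> real \<Rightarrow> real" where "bb \<theta> = (fst \<theta> + snd \<theta>) / 2"

definition Dv :: "(nat \<Rightarrow> real) \<Rightarrow> (nat \<Rightarrow> real) \<Rightarrow> (nat \<Rightarrow> real) \<Rightarrow> nat list \<Rightarrow> real" where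
  "Dv A B C is = A (length is - 1) * prod_list (map ca is) + B (length is - 1) * prod_list (map cb is)
     - C (length is - 1) * prod_list (map cc is)"

definition Dn :: "nat list \<Rightarrow> real \<times> real \<Rightarrow> real" where
  "Dn is \<theta> = Dv (\<lambda>n. Polygamma n (aa \<theta>)) (\<lambda>n. Polygamma n (bb \<theta>)) (\<lambda>n. Polygamma n (fst \<theta>)) is"

lemma open_Theta: "open Theta"
  unfolding Theta_def by (intro open_Collect_conj open_Collect_less continuous_intros)

lemma Theta_pos: "\<theta> \<in> Theta \<Longrightarrow> aa \<theta> > 0 \<and> bb \<theta> > 0 \<and> fst \<theta> > 0"
  unfolding Theta_def aa_def bb_def by auto

lemma upd_comp[simp]: "upd l (comp l \<theta>) \<theta> = \<theta>"
  unfolding upd_def comp_def by auto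

lemma open_line: "open {t. upd l t \<theta> \<in> Theta}"
  unfolding upd_def Theta_def
  by (cases "l = 1"; simp; intro open_Collect_conj open_Collect_less continuous_intros)

lemma pd_eq:
  assumes "\<theta> \<in> Theta" "\<And>\<eta>. \<eta> \<in> Theta \<Longrightarrow> F \<eta> = H \<eta>"
    "((\<lambda>t. H (upd l t \<theta>)) has_real_derivative X) (at (comp l \<theta>))"
  shows "pd l F \<theta> = X"
proof -
  have "((\<lambda>t. F (upd l t \<theta>)) has_real_derivative X) (at (comp l \<theta>))"
    apply (rule has_field_derivative_transform_within_open[OF assms(3), where S="{t. upd l t \<theta> \<in> Theta}"])
    using open_line assms by auto
  thus ?thesis unfolding pd_def by (rule DERIV_imp_deriv)
qed

lemma pos_not_nonpos_Int: "(x::real) > 0 \<Longrightarrow> x \<notin> \<int>\<^sub>\<le>\<^sub>0"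
  by (auto elim!: nonpos_Ints_cases)

lemma Dn_deriv:
  assumes "\<theta> \<in> Theta" "l \<in> idx" "is \<noteq> []"
  shows "((\<lambda>t. Dn is (upd l t \<theta>)) has_real_derivative Dn (l # is) \<theta>) (at (comp l \<theta>))"
proof -
  obtain n where n: "length is = Suc n" using assms(3) by (cases "is") auto
  have pos: "aa \<theta> > 0" "bb \<theta> > 0" "fst \<theta> > 0" using Theta_pos[OF assms(1)] by auto
  note np = pos_not_nonpos_Int[OF pos(1)] pos_not_nonpos_Int[OF pos(2)] pos_not_nonpos_Int[OF pos(3)]
  show ?thesis
  proof (cases "l = 1")
    case True
    have e: "\<And>t. Dn is (upd l t \<theta>) = Polygamma n ((t - snd \<theta>)/2) * prod_list (map ca is)
       + Polygamma n ((t + snd \<theta>)/2) * prod_list (map cb is) - Polygamma n t * prod_list (map cc is)"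
      using True n by (simp add: Dn_def Dv_def upd_def aa_def bb_def)
    have c: "comp l \<theta> = fst \<theta>" using True by (simp add: comp_def)
    have d1: "((\<lambda>t. Polygamma n ((t - snd \<theta>)/2)) has_real_derivative Polygamma (Suc n) ((fst \<theta> - snd \<theta>)/2) * (1/2)) (at (fst \<theta>))"
      by (rule DERIV_chain2[OF has_field_derivative_Polygamma]) (use np in \<open>auto intro!: derivative_eq_intros simp: aa_def bb_def\<close>)
    have d2: "((\<lambda>t. Polygamma n ((t + snd \<theta>)/2)) has_real_derivative Polygamma (Suc n) ((fst \<theta> + snd \<theta>)/2) * (1/2)) (at (fst \<theta>))"
      by (rule DERIV_chain2[OF has_field_derivative_Polygamma]) (use np in \<open>auto intro!: derivative_eq_intros simp: aa_def bb_def\<close>)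
    have d3: "((\<lambda>t. Polygamma n t) has_real_derivative Polygamma (Suc n) (fst \<theta>)) (at (fst \<theta>))"
      by (rule has_field_derivative_Polygamma) (use np in auto)
    have "((\<lambda>t. Polygamma n ((t - snd \<theta>)/2) * prod_list (map ca is)
       + Polygamma n ((t + snd \<theta>)/2) * prod_list (map cb is) - Polygamma n t * prod_list (map cc is))
       has_real_derivative (Polygamma (Suc n) ((fst \<theta> - snd \<theta>)/2) * (1/2) * prod_list (map ca is)
       + Polygamma (Suc n) ((fst \<theta> + snd \<theta>)/2) * (1/2) * prod_list (map cb is) - Polygamma (Suc n) (fst \<theta>) * prod_list (map cc is))) (at (fst \<theta>))"
      by (intro DERIV_add DERIV_diff DERIV_cmult_right d1 d2 d3)
    also have "(Polygamma (Suc n) ((fst \<theta> - snd \<theta>)/2) * (1/2) * prod_list (map ca is)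
       + Polygamma (Suc n) ((fst \<theta> + snd \<theta>)/2) * (1/2) * prod_list (map cb is) - Polygamma (Suc n) (fst \<theta>) * prod_list (map cc is)) = Dn (l # is) \<theta>"
      using True n by (simp add: Dn_def Dv_def ca_def cb_def cc_def aa_def bb_def)
    finally show ?thesis unfolding e c .
  next
    case False
    then have l2: "l = 2" using assms(2) by (auto simp: idx_def)
    have e: "\<And>t. Dn is (upd l t \<theta>) = Polygamma n ((fst \<theta> - t)/2) * prod_list (map ca is)
       + Polygamma n ((fst \<theta> + t)/2) * prod_list (map cb is) - Polygamma n (fst \<theta>) * prod_list (map cc is)"
      using l2 n by (simp add: Dn_def Dv_def upd_def aa_def bb_def)
    have c: "comp l \<theta> = snd \<theta>" using l2 by (simp add: comp_def)
    have d1: "((\<lambda>t. Polygamma n ((fst \<theta> - t)/2)) has_real_derivative Polygamma (Suc n) ((fst \<theta> - snd \<theta>)/2) * (-1/2)) (at (snd \<theta>))"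
      by (rule DERIV_chain2[OF has_field_derivative_Polygamma]) (use np in \<open>auto intro!: derivative_eq_intros simp: aa_def bb_def\<close>)
    have d2: "((\<lambda>t. Polygamma n ((fst \<theta> + t)/2)) has_real_derivative Polygamma (Suc n) ((fst \<theta> + snd \<theta>)/2) * (1/2)) (at (snd \<theta>))"
      by (rule DERIV_chain2[OF has_field_derivative_Polygamma]) (use np in \<open>auto intro!: derivative_eq_intros simp: aa_def bb_def\<close>)
    have "((\<lambda>t. Polygamma n ((fst \<theta> - t)/2) * prod_list (map ca is)
       + Polygamma n ((fst \<theta> + t)/2) * prod_list (map cb is) - Polygamma n (fst \<theta>) * prod_list (map cc is))
       has_real_derivative (Polygamma (Suc n) ((fst \<theta> - snd \<theta>)/2) * (-1/2) * prod_list (map ca is)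
       + Polygamma (Suc n) ((fst \<theta> + snd \<theta>)/2) * (1/2) * prod_list (map cb is) - 0)) (at (snd \<theta>))"
      by (intro DERIV_add DERIV_diff DERIV_cmult_right d1 d2 DERIV_const)
    also have "(Polygamma (Suc n) ((fst \<theta> - snd \<theta>)/2) * (-1/2) * prod_list (map ca is)
       + Polygamma (Suc n) ((fst \<theta> + snd \<theta>)/2) * (1/2) * prod_list (map cb is) - 0) = Dn (l # is) \<theta>"
      using l2 n by (simp add: Dn_def Dv_def ca_def cb_def cc_def aa_def bb_def)
    finally show ?thesis unfolding e c .
  qed
qed

lemma exp_sub_one_bound: "\<bar>exp u - 1\<bar> \<le> \<bar>u\<bar> * exp \<bar>u\<bar>" for u :: real
proof (cases "u \<ge> 0")
  case True
  have "1 + (- u) \<le> exp (- u)" by (rule exp_ge_add_one_self)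
  then have "(1 - u) * exp u \<le> exp (- u) * exp u" by (intro mult_right_mono) auto
  then have "exp u - 1 \<le> u * exp u" by (simp add: exp_minus field_simps)
  moreover have "exp u \<ge> 1" using True by simp
  ultimately show ?thesis using True by simp
next
  case False
  have "1 + u \<le> exp u" by (rule exp_ge_add_one_self)
  moreover have "exp u \<le> 1" using False by simp
  moreover have "exp \<bar>u\<bar> \<ge> 1" by simp
  ultimately have "\<bar>exp u - 1\<bar> \<le> \<bar>u\<bar>" using False by (simp only: abs_if split: if_split) linarith
  also have "\<dots> \<le> \<bar>u\<bar> * exp \<bar>u\<bar>" using \<open>exp \<bar>u\<bar> \<ge> 1\<close> by (simp add: mult_le_cancel_left1)
  finally show ?thesis .
qed

lemma abs_le_exp: "d > 0 \<Longrightarrow> \<bar>y\<bar> \<le> (1 / d) * exp (d * \<bar>y\<bar>)" for d y :: real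
proof -
  assume d: "d > 0"
  have "1 + d * \<bar>y\<bar> \<le> exp (d * \<bar>y\<bar>)" by (rule exp_ge_add_one_self)
  then have "d * \<bar>y\<bar> \<le> exp (d * \<bar>y\<bar>)" by linarith
  then show ?thesis using d by (simp add: field_simps)
qed

lemma exp_abs_le: "exp (c * \<bar>y\<bar>) \<le> exp (c * y) + exp (- c * y)" for c y :: real
  by (cases "y \<ge> 0") (auto simp: add_increasing2 add_increasing)

lemma quot_bound:
  fixes d h y :: real
  assumes d: "d > 0" and h: "h \<noteq> 0" "\<bar>h\<bar> \<le> d"
  shows "\<bar>(exp (h * y) - 1) / h\<bar> \<le> (1 / d) * (exp (2 * d * y) + exp (- 2 * d * y))"
proof -
  have "\<bar>(exp (h * y) - 1) / h\<bar> = \<bar>exp (h * y) - 1\<bar> / \<bar>h\<bar>" by (simp add: abs_divide)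
  also have "\<dots> \<le> (\<bar>h * y\<bar> * exp \<bar>h * y\<bar>) / \<bar>h\<bar>"
    by (intro divide_right_mono exp_sub_one_bound) simp
  also have "\<dots> = \<bar>y\<bar> * exp (\<bar>h\<bar> * \<bar>y\<bar>)" using h by (simp add: abs_mult)
  also have "\<dots> \<le> \<bar>y\<bar> * exp (d * \<bar>y\<bar>)"
    using h by (intro mult_left_mono) (auto intro: mult_right_mono)
  also have "\<dots> \<le> ((1 / d) * exp (d * \<bar>y\<bar>)) * exp (d * \<bar>y\<bar>)"
    by (intro mult_right_mono abs_le_exp d) simp
  also have "\<dots> = (1 / d) * exp (d * \<bar>y\<bar> + d * \<bar>y\<bar>)" by (simp only: exp_add mult.assoc)
  also have "\<dots> = (1 / d) * exp ((2 * d) * \<bar>y\<bar>)" by (simp add: algebra_simps)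
  also have "\<dots> \<le> (1 / d) * (exp (2 * d * y) + exp (- (2 * d) * y))"
    using d by (intro mult_left_mono exp_abs_le) simp
  finally show ?thesis by simp
qed

lemma Y_bound:
  fixes d t y :: real
  assumes d: "d > 0"
  shows "\<bar>y\<bar> * exp (t * y) \<le> (1 / d) * (exp ((t + d) * y) + exp ((t - d) * y))"
proof -
  have "(1 / d) * exp (d * \<bar>y\<bar>) \<le> (1 / d) * (exp (d * y) + exp (- d * y))"
    by (rule mult_left_mono[OF exp_abs_le]) (use d in simp)
  then have "\<bar>y\<bar> \<le> (1 / d) * (exp (d * y) + exp (- d * y))"
    using abs_le_exp[OF d, of y] by linarith
  then have "\<bar>y\<bar> * exp (t * y) \<le> ((1 / d) * (exp (d * y) + exp (- d * y))) * exp (t * y)"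
    by (intro mult_right_mono) auto
  also have "\<dots> = (1 / d) * (exp ((t + d) * y) + exp ((t - d) * y))"
    by (simp add: algebra_simps mult_exp_exp)
  finally show ?thesis .
qed

lemma deriv_int:
  fixes f Y :: "real \<Rightarrow> real" and I :: "real set" and t :: real
  assumes I: "open I" "t \<in> I" and mf[measurable]: "f \<in> borel_measurable borel"
    and mY[measurable]: "Y \<in> borel_measurable borel"
    and int: "\<And>s. s \<in> I \<Longrightarrow> integrable lborel (\<lambda>x. f x * exp (s * Y x))"
  shows "integrable lborel (\<lambda>x. f x * Y x * exp (t * Y x))"
    and "((\<lambda>s. \<integral>x. f x * exp (s * Y x) \<partial>lborel) has_real_derivative
          (\<integral>x. f x * Y x * exp (t * Y x) \<partial>lborel)) (at t)"
proof -
  obtain e where e: "e > 0" "ball t e \<subseteq> I" using I openE by blast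
  define d where "d = e / 3"
  have d: "d > 0" using e by (simp add: d_def)
  have inI: "t + c \<in> I" if "\<bar>c\<bar> \<le> 2 * d" for c
    using e that by (intro subsetD[OF e(2)]) (auto simp: d_def dist_real_def)
  have i1: "integrable lborel (\<lambda>x. f x * exp ((t + c) * Y x))" if "\<bar>c\<bar> \<le> 2 * d" for c
    using int[OF inI[OF that]] .
  define w where "w x = (1 / d) * (\<bar>f x * exp ((t + 2 * d) * Y x)\<bar> + \<bar>f x * exp ((t + - (2 * d)) * Y x)\<bar>)" for x
  have wi: "integrable lborel w"
    unfolding w_def using i1[of "2 * d"] i1[of "- (2 * d)"] d by (intro integrable_mult_right integrable_add integrable_abs) auto
  define w1 where "w1 x = (1 / d) * (\<bar>f x * exp ((t + d) * Y x)\<bar> + \<bar>f x * exp ((t + - d) * Y x)\<bar>)" for x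
  have w1i: "integrable lborel w1"
    unfolding w1_def using i1[of "d"] i1[of "- d"] d by (intro integrable_mult_right integrable_add integrable_abs) auto
  show A: "integrable lborel (\<lambda>x. f x * Y x * exp (t * Y x))"
  proof (rule Bochner_Integration.integrable_bound[OF w1i])
    show "AE x in lborel. norm (f x * Y x * exp (t * Y x)) \<le> norm (w1 x)"
    proof (intro AE_I2)
      fix x
      have "norm (f x * Y x * exp (t * Y x)) = \<bar>f x\<bar> * (\<bar>Y x\<bar> * exp (t * Y x))"
        by (simp add: abs_mult)
      also have "\<dots> \<le> \<bar>f x\<bar> * ((1 / d) * (exp ((t + d) * Y x) + exp ((t - d) * Y x)))"
        by (intro mult_left_mono Y_bound d) simp
      also have "\<dots> = w1 x" unfolding w1_def using d by (simp add: abs_mult algebra_simps)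
      also have "\<dots> \<le> norm (w1 x)" by simp
      finally show "norm (f x * Y x * exp (t * Y x)) \<le> norm (w1 x)" .
    qed
  qed measurable
  define F where "F s = (\<integral>x. f x * exp (s * Y x) \<partial>lborel)" for s
  have "((\<lambda>s. (F s - F t) / (s - t)) \<longlongrightarrow> (\<integral>x. f x * Y x * exp (t * Y x) \<partial>lborel)) (at t within ball t d)"
    unfolding tendsto_at_iff_sequentially
  proof (intro allI impI)
    fix X :: "nat \<Rightarrow> real"
    assume X: "\<forall>i. X i \<in> ball t d - {t}" and Xt: "X \<longlonglongrightarrow> t"
    define g where "g i x = f x * exp (t * Y x) * ((exp ((X i - t) * Y x) - 1) / (X i - t))" for i x
    have Xne: "X i - t \<noteq> 0" for i using X by auto
    have Xle: "\<bar>X i - t\<bar> \<le> d" for i using X by (auto simp: dist_real_def abs_minus_commute less_imp_le)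
    have eq: "(F (X i) - F t) / (X i - t) = (\<integral>x. g i x \<partial>lborel)" for i
    proof -
      have ia: "integrable lborel (\<lambda>x. f x * exp (X i * Y x))" using i1[of "X i - t"] Xle[of i] d by simp
      have ib: "integrable lborel (\<lambda>x. f x * exp (t * Y x))" using i1[of 0] d by simp
      have "F (X i) - F t = (\<integral>x. f x * exp (X i * Y x) - f x * exp (t * Y x) \<partial>lborel)"
        unfolding F_def using ia ib by simp
      then have "(F (X i) - F t) / (X i - t) = (\<integral>x. (f x * exp (X i * Y x) - f x * exp (t * Y x)) / (X i - t) \<partial>lborel)"
        by simp
      also have "\<dots> = (\<integral>x. g i x \<partial>lborel)"
      proof (rule Bochner_Integration.integral_cong[OF refl])
        fix x
        have "exp (X i * Y x) = exp (t * Y x) * exp ((X i - t) * Y x)"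
          by (simp add: mult_exp_exp algebra_simps)
        then show "(f x * exp (X i * Y x) - f x * exp (t * Y x)) / (X i - t) = g i x"
          unfolding g_def by (simp add: algebra_simps)
      qed
      finally show ?thesis .
    qed
    have lim: "(\<lambda>i. g i x) \<longlonglongrightarrow> f x * exp (t * Y x) * Y x" for x
    proof -
      have D: "((\<lambda>h. exp (h * Y x)) has_real_derivative Y x) (at 0)"
        by (auto intro!: derivative_eq_intros)
      have "((\<lambda>h. (exp (h * Y x) - exp (0 * Y x)) / (h - 0)) \<longlongrightarrow> Y x) (at 0)"
        using D unfolding has_field_derivative_iff .
      then have "((\<lambda>h. (exp (h * Y x) - exp (0 * Y x)) / (h - 0)) \<circ> (\<lambda>i. X i - t)) \<longlonglongrightarrow> Y x"
        unfolding tendsto_at_iff_sequentially[where s=UNIV] using Xne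
        by (auto intro!: spec[where x="\<lambda>i. X i - t"] dest: spec[where x="\<lambda>i. X i - t"]
                 simp: LIM_zero[OF Xt] Xt tendsto_diff[OF Xt tendsto_const, simplified])
      then have "(\<lambda>i. (exp ((X i - t) * Y x) - 1) / (X i - t)) \<longlonglongrightarrow> Y x" by (simp add: o_def)
      then show ?thesis unfolding g_def by (intro tendsto_mult tendsto_const)
    qed
    have bnd: "norm (g i x) \<le> w x" for i x
    proof -
      have "norm (g i x) = \<bar>f x * exp (t * Y x)\<bar> * \<bar>(exp ((X i - t) * Y x) - 1) / (X i - t)\<bar>"
        unfolding g_def by (simp add: abs_mult)
      also have "\<dots> \<le> \<bar>f x * exp (t * Y x)\<bar> * ((1 / d) * (exp (2 * d * Y x) + exp (- 2 * d * Y x)))"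
        by (intro mult_left_mono quot_bound d Xne Xle) simp
      also have "\<dots> = w x" unfolding w_def using d
        by (simp add: abs_mult algebra_simps mult_exp_exp)
      finally show ?thesis .
    qed
    have "(\<lambda>i. \<integral>x. g i x \<partial>lborel) \<longlonglongrightarrow> (\<integral>x. f x * exp (t * Y x) * Y x \<partial>lborel)"
    proof (rule integral_dominated_convergence[OF _ _ wi])
      show "(\<lambda>x. f x * exp (t * Y x) * Y x) \<in> borel_measurable lborel" by measurable
      show "\<And>i. g i \<in> borel_measurable lborel" unfolding g_def by measurable
    qed (use bnd lim in auto)
    then show "((\<lambda>s. (F s - F t) / (s - t)) \<circ> X) \<longlonglongrightarrow> (\<integral>x. f x * Y x * exp (t * Y x) \<partial>lborel)"
      by (simp add: o_def eq mult_ac)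
  qed
  then have "((\<lambda>s. (F s - F t) / (s - t)) \<longlongrightarrow> (\<integral>x. f x * Y x * exp (t * Y x) \<partial>lborel)) (at t)"
    using at_within_open[of t "ball t d"] d by simp
  then show "((\<lambda>s. \<integral>x. f x * exp (s * Y x) \<partial>lborel) has_real_derivative
          (\<integral>x. f x * Y x * exp (t * Y x) \<partial>lborel)) (at t)"
    unfolding has_field_derivative_iff F_def .
qed

definition Y1 :: "real \<Rightarrow> real" where "Y1 x = - ln (cosh x)"
definition Yc :: "nat \<Rightarrow> real \<Rightarrow> real" where "Yc i x = (if i = 1 then Y1 x else x)"
definition E :: "real \<times> real \<Rightarrow> real \<Rightarrow> real" where "E \<theta> x = exp (fst \<theta> * Y1 x + snd \<theta> * x)"
definition LK :: "real \<times> real \<Rightarrow> real" where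
  "LK \<theta> = (fst \<theta> - 1) * ln 2 + ln_Gamma (aa \<theta>) + ln_Gamma (bb \<theta>) - ln_Gamma (fst \<theta>)"
definition K :: "real \<times> real \<Rightarrow> real" where "K \<theta> = exp (LK \<theta>)"
definition Dn1 :: "nat \<Rightarrow> real \<times> real \<Rightarrow> real" where "Dn1 i \<theta> = Dn [i] \<theta> + ln 2 * cc i"

lemma Y1_meas[measurable]: "Y1 \<in> borel_measurable borel"
  unfolding Y1_def by (intro borel_measurable_continuous_onI continuous_intros) (auto simp: cosh_real_pos)
lemma Y1_cont[continuous_intros]: "continuous_on S Y1"
  unfolding Y1_def by (intro continuous_intros) (auto simp: cosh_real_pos)

lemma LK_deriv:
  assumes "\<theta> \<in> Theta" "l \<in> idx"
  shows "((\<lambda>t. LK (upd l t \<theta>)) has_real_derivative Dn1 l \<theta>) (at (comp l \<theta>))"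
proof -
  have pos: "(fst \<theta> - snd \<theta>)/2 > 0" "(fst \<theta> + snd \<theta>)/2 > 0" "fst \<theta> > 0"
    using Theta_pos[OF assms(1)] by (auto simp: aa_def bb_def)
  show ?thesis
  proof (cases "l = 1")
    case True
    have e: "\<And>t. LK (upd l t \<theta>) = (t - 1) * ln 2 + ln_Gamma ((t - snd \<theta>)/2) + ln_Gamma ((t + snd \<theta>)/2) - ln_Gamma t"
      using True by (simp add: LK_def upd_def aa_def bb_def)
    have c: "comp l \<theta> = fst \<theta>" using True by (simp add: comp_def)
    have d1: "((\<lambda>t. ln_Gamma ((t - snd \<theta>)/2)) has_real_derivative Digamma ((fst \<theta> - snd \<theta>)/2) * (1/2)) (at (fst \<theta>))"
      by (rule DERIV_chain2[OF has_field_derivative_ln_Gamma_real]) (use pos in \<open>auto intro!: derivative_eq_intros\<close>)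
    have d2: "((\<lambda>t. ln_Gamma ((t + snd \<theta>)/2)) has_real_derivative Digamma ((fst \<theta> + snd \<theta>)/2) * (1/2)) (at (fst \<theta>))"
      by (rule DERIV_chain2[OF has_field_derivative_ln_Gamma_real]) (use pos in \<open>auto intro!: derivative_eq_intros\<close>)
    have d3: "(ln_Gamma has_real_derivative Digamma (fst \<theta>)) (at (fst \<theta>))"
      by (rule has_field_derivative_ln_Gamma_real) (use pos in auto)
    have d0: "((\<lambda>t. (t - 1) * ln 2) has_real_derivative ln 2) (at (fst \<theta>))"
      by (auto intro!: derivative_eq_intros)
    have "((\<lambda>t. (t - 1) * ln 2 + ln_Gamma ((t - snd \<theta>)/2) + ln_Gamma ((t + snd \<theta>)/2) - ln_Gamma t)
       has_real_derivative ln 2 + Digamma ((fst \<theta> - snd \<theta>)/2) * (1/2) + Digamma ((fst \<theta> + snd \<theta>)/2) * (1/2) - Digamma (fst \<theta>)) (at (fst \<theta>))"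
      by (intro DERIV_add DERIV_diff d0 d1 d2 d3)
    also have "ln 2 + Digamma ((fst \<theta> - snd \<theta>)/2) * (1/2) + Digamma ((fst \<theta> + snd \<theta>)/2) * (1/2) - Digamma (fst \<theta>) = Dn1 l \<theta>"
      using True by (simp add: Dn1_def Dn_def Dv_def ca_def cb_def cc_def aa_def bb_def)
    finally show ?thesis unfolding e c .
  next
    case False
    then have l2: "l = 2" using assms(2) by (auto simp: idx_def)
    have e: "\<And>t. LK (upd l t \<theta>) = (fst \<theta> - 1) * ln 2 + ln_Gamma ((fst \<theta> - t)/2) + ln_Gamma ((fst \<theta> + t)/2) - ln_Gamma (fst \<theta>)"
      using l2 by (simp add: LK_def upd_def aa_def bb_def)
    have c: "comp l \<theta> = snd \<theta>" using l2 by (simp add: comp_def)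
    have d1: "((\<lambda>t. ln_Gamma ((fst \<theta> - t)/2)) has_real_derivative Digamma ((fst \<theta> - snd \<theta>)/2) * (-1/2)) (at (snd \<theta>))"
      by (rule DERIV_chain2[OF has_field_derivative_ln_Gamma_real]) (use pos in \<open>auto intro!: derivative_eq_intros\<close>)
    have d2: "((\<lambda>t. ln_Gamma ((fst \<theta> + t)/2)) has_real_derivative Digamma ((fst \<theta> + snd \<theta>)/2) * (1/2)) (at (snd \<theta>))"
      by (rule DERIV_chain2[OF has_field_derivative_ln_Gamma_real]) (use pos in \<open>auto intro!: derivative_eq_intros\<close>)
    have "((\<lambda>t. (fst \<theta> - 1) * ln 2 + ln_Gamma ((fst \<theta> - t)/2) + ln_Gamma ((fst \<theta> + t)/2) - ln_Gamma (fst \<theta>))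
       has_real_derivative 0 + Digamma ((fst \<theta> - snd \<theta>)/2) * (-1/2) + Digamma ((fst \<theta> + snd \<theta>)/2) * (1/2) - 0) (at (snd \<theta>))"
      by (intro DERIV_add DERIV_diff DERIV_const d1 d2)
    also have "0 + Digamma ((fst \<theta> - snd \<theta>)/2) * (-1/2) + Digamma ((fst \<theta> + snd \<theta>)/2) * (1/2) - 0 = Dn1 l \<theta>"
      using l2 by (simp add: Dn1_def Dn_def Dv_def ca_def cb_def cc_def aa_def bb_def)
    finally show ?thesis unfolding e c .
  qed
qed

lemma K_deriv:
  assumes "\<theta> \<in> Theta" "l \<in> idx"
  shows "((\<lambda>t. K (upd l t \<theta>)) has_real_derivative K \<theta> * Dn1 l \<theta>) (at (comp l \<theta>))"
  unfolding K_def using DERIV_chain2[OF DERIV_exp LK_deriv[OF assms]] by (simp add: mult.commute)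

lemma Dn1_deriv:
  assumes "\<theta> \<in> Theta" "l \<in> idx"
  shows "((\<lambda>t. Dn1 i (upd l t \<theta>)) has_real_derivative Dn [l,i] \<theta>) (at (comp l \<theta>))"
  unfolding Dn1_def using DERIV_add[OF Dn_deriv[OF assms, of "[i]"] DERIV_const[of "ln 2 * cc i"]] by simp

lemma K_pos: "K \<theta> > 0" unfolding K_def by simp

lemma ln_sech: "ln (sech x) = Y1 x"
  unfolding sech_def Y1_def by (simp add: ln_div cosh_real_pos)

lemma dens_eq:
  assumes "\<theta> \<in> Theta"
  shows "dens \<theta> x = E \<theta> x / K \<theta>"
proof -
  have pos: "aa \<theta> > 0" "bb \<theta> > 0" "fst \<theta> > 0" using Theta_pos[OF assms] by auto
  have s: "sech x > 0" unfolding sech_def by (simp add: cosh_real_pos)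
  have ab: "aa \<theta> + bb \<theta> = fst \<theta>" by (simp add: aa_def bb_def field_simps)
  have B: "Beta ((fst \<theta> - snd \<theta>) / 2) ((fst \<theta> + snd \<theta>) / 2)
       = exp (ln_Gamma (aa \<theta>) + ln_Gamma (bb \<theta>) - ln_Gamma (fst \<theta>))"
    unfolding Beta_def aa_def[symmetric] bb_def[symmetric] ab
    using pos by (simp add: Gamma_real_pos_exp exp_add exp_diff)
  have P1: "(2::real) powr (1 - fst \<theta>) = exp ((1 - fst \<theta>) * ln 2)" by (simp add: powr_def)
  have P2: "sech x powr fst \<theta> = exp (fst \<theta> * Y1 x)" using s by (simp add: powr_def ln_sech)
  have "dens \<theta> x = exp ((1 - fst \<theta>) * ln 2) * exp (fst \<theta> * Y1 x) * exp (snd \<theta> * x)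
      / exp (ln_Gamma (aa \<theta>) + ln_Gamma (bb \<theta>) - ln_Gamma (fst \<theta>))"
    unfolding dens_def P1 P2 B ..
  also have "\<dots> = exp (fst \<theta> * Y1 x + snd \<theta> * x - LK \<theta>)"
    unfolding LK_def by (simp add: exp_add[symmetric] exp_diff[symmetric] algebra_simps)
  also have "\<dots> = E \<theta> x / K \<theta>" unfolding E_def K_def by (simp add: exp_diff)
  finally show ?thesis .
qed

lemma loglik_eq: "\<eta> \<in> Theta \<Longrightarrow> loglik \<eta> x = fst \<eta> * Y1 x + snd \<eta> * x - LK \<eta>"
  unfolding loglik_def by (simp add: dens_eq E_def K_def exp_diff[symmetric])

lemma score_eq:
  assumes "\<theta> \<in> Theta" "i \<in> idx"
  shows "score i \<theta> x = Yc i x - Dn1 i \<theta>"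
  unfolding score_def
proof (rule pd_eq[OF assms(1), where H="\<lambda>\<eta>. fst \<eta> * Y1 x + snd \<eta> * x - LK \<eta>"])
  show "\<And>\<eta>. \<eta> \<in> Theta \<Longrightarrow> loglik \<eta> x = fst \<eta> * Y1 x + snd \<eta> * x - LK \<eta>" by (rule loglik_eq)
  show "((\<lambda>t. fst (upd i t \<theta>) * Y1 x + snd (upd i t \<theta>) * x - LK (upd i t \<theta>)) has_real_derivative Yc i x - Dn1 i \<theta>)
     (at (comp i \<theta>))"
  proof (cases "i = 1")
    case True
    have "((\<lambda>t. t * Y1 x + snd \<theta> * x - LK (upd i t \<theta>)) has_real_derivative 1 * Y1 x + 0 - Dn1 i \<theta>) (at (comp i \<theta>))"
      by (intro DERIV_add DERIV_diff DERIV_cmult_right DERIV_ident DERIV_const LK_deriv assms)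
    then show ?thesis using True by (simp add: upd_def Yc_def)
  next
    case False
    have "((\<lambda>t. fst \<theta> * Y1 x + t * x - LK (upd i t \<theta>)) has_real_derivative 0 + 1 * x - Dn1 i \<theta>) (at (comp i \<theta>))"
      by (intro DERIV_add DERIV_diff DERIV_cmult_right DERIV_ident DERIV_const LK_deriv assms)
    then show ?thesis using False by (simp add: upd_def Yc_def)
  qed
qed

lemma lim_h0: "filterlim (\<lambda>t::real. (ln t - ln (1 - t)) / 2) at_bot (at_right 0)"
  by real_asymp
lemma lim_h1: "filterlim (\<lambda>t::real. (ln t - ln (1 - t)) / 2) at_top (at_left 1)"
  by real_asymp

lemma fg_eq:
  assumes t: "0 < t" "t < 1"
  shows "E \<theta> ((ln t - ln (1 - t)) / 2) * (1 / (2 * t * (1 - t)))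
       = exp ((fst \<theta> - 1) * ln 2) * (t powr (bb \<theta> - 1) * (1 - t) powr (aa \<theta> - 1))"
proof -
  define h where "h = (ln t - ln (1 - t)) / 2"
  have "2 * h = ln t - ln (1 - t)" unfolding h_def by simp
  then have e2h: "exp (2 * h) = t / (1 - t)" using t by (simp add: exp_diff)
  have ch: "cosh h = exp (- h) / (2 * (1 - t))"
  proof -
    have "cosh h = (exp h + exp (- h)) / 2" by (simp add: cosh_def)
    also have "exp h = exp (- h) * exp (2 * h)" by (simp add: mult_exp_exp)
    finally show ?thesis using t unfolding e2h by (simp add: field_simps)
  qed
  have l2: "ln (2 * (1 - t)) = ln 2 + ln (1 - t)" by (rule ln_mult_pos) (use t in auto)
  have "ln (cosh h) = ln (exp (- h)) - ln (2 * (1 - t))" unfolding ch by (rule ln_divide_pos) (use t in auto)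
  also have "\<dots> = - h - (ln 2 + ln (1 - t))" by (simp only: ln_exp l2)
  finally have lc: "ln (cosh h) = - h - ln 2 - ln (1 - t)" by simp
  have e3: "exp (ln 2 + ln t + ln (1 - t)) = 2 * t * (1 - t)" using t by (simp add: exp_add)
  have lh': "1 / (2 * t * (1 - t)) = exp (- ln 2 - ln t - ln (1 - t))"
  proof -
    have "exp (- ln 2 - ln t - ln (1 - t)) = exp (- (ln 2 + ln t + ln (1 - t)))" by simp
    also have "\<dots> = inverse (2 * t * (1 - t))" by (simp only: exp_minus e3)
    finally show ?thesis by (simp add: inverse_eq_divide)
  qed
  have "E \<theta> h * (1 / (2 * t * (1 - t)))
      = exp (fst \<theta> * (h + ln 2 + ln (1 - t)) + snd \<theta> * h + (- ln 2 - ln t - ln (1 - t)))"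
    unfolding E_def Y1_def lc lh' by (simp add: exp_add[symmetric] algebra_simps)
  also have "\<dots> = exp ((fst \<theta> - 1) * ln 2 + (bb \<theta> - 1) * ln t + (aa \<theta> - 1) * ln (1 - t))"
    unfolding h_def aa_def bb_def by (simp add: algebra_simps diff_divide_distrib add_divide_distrib)
  also have "\<dots> = exp ((fst \<theta> - 1) * ln 2) * (t powr (bb \<theta> - 1) * (1 - t) powr (aa \<theta> - 1))"
    using t by (simp add: powr_def exp_add mult.commute)
  finally show ?thesis unfolding h_def .
qed

lemma norm_int:
  assumes T: "\<theta> \<in> Theta"
  shows "integrable lborel (E \<theta>)" "(\<integral>x. E \<theta> x \<partial>lborel) = K \<theta>"
proof -
  have pos: "aa \<theta> > 0" "bb \<theta> > 0" "fst \<theta> > 0" using Theta_pos[OF T] by auto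
  define C where "C = exp ((fst \<theta> - 1) * ln 2)"
  define h where "h t = (ln t - ln (1 - t)) / 2" for t :: real
  define h' where "h' t = 1 / (2 * t * (1 - t))" for t :: real
  define B where "B t = C * (t powr (bb \<theta> - 1) * (1 - t) powr (aa \<theta> - 1))" for t :: real
  have BI: "set_integrable lborel {0..1} B"
    unfolding B_def using integrable_Beta[OF pos(2) pos(1)]
    by (simp add: set_integrable_mult_right)
  have Bint: "(B has_integral C * Beta (bb \<theta>) (aa \<theta>)) {0..1}"
    unfolding B_def by (intro has_integral_mult_right has_integral_Beta_real pos)
  have fgB: "E \<theta> (h t) * h' t = B t" if "t \<in> {0<..<1}" for t
    using fg_eq[of t \<theta>] that unfolding h_def h'_def B_def C_def by auto
  have fgI: "set_integrable lborel (einterval (ereal 0) (ereal 1)) (\<lambda>t. E \<theta> (h t) * h' t)"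
  proof -
    have "set_integrable lborel {0<..<1} B"
      by (rule set_integrable_subset[OF BI]) auto
    then show ?thesis by (subst set_integrable_cong[OF refl refl fgB]) (auto simp: einterval_eq)
  qed
  have deriv: "(h has_real_derivative h' t) (at t)" if "0 < t" "t < 1" for t
    unfolding h_def h'_def using that
    by (auto intro!: derivative_eq_intros simp: field_simps)
  have p1: "ereal 0 < ereal 1" by simp
  have p2: "\<And>x. ereal 0 < ereal x \<Longrightarrow> ereal x < ereal 1 \<Longrightarrow> (h has_real_derivative h' x) (at x)"
    using deriv by auto
  have p3: "\<And>x. ereal 0 < ereal x \<Longrightarrow> ereal x < ereal 1 \<Longrightarrow> isCont (E \<theta>) (h x)"
    unfolding E_def by (intro continuous_at_imp_continuous_on continuous_intros)
       (auto simp: Y1_def cosh_real_pos intro!: continuous_intros)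
  have p4: "\<And>x. ereal 0 < ereal x \<Longrightarrow> ereal x < ereal 1 \<Longrightarrow> isCont h' x"
    unfolding h'_def by (auto intro!: continuous_intros)
  have p5: "\<And>x. ereal 0 < ereal x \<Longrightarrow> ereal x < ereal 1 \<Longrightarrow> 0 \<le> E \<theta> (h x)"
    unfolding E_def by simp
  have p6: "\<And>x. ereal 0 \<le> ereal x \<Longrightarrow> ereal x \<le> ereal 1 \<Longrightarrow> 0 \<le> h' x"
    unfolding h'_def by auto
  have p7: "((ereal \<circ> h \<circ> real_of_ereal) \<longlongrightarrow> - \<infinity>) (at_right (ereal 0))"
    unfolding comp_assoc[symmetric] ereal_tendsto_simps using lim_h0 unfolding h_def .
  have p8: "((ereal \<circ> h \<circ> real_of_ereal) \<longlongrightarrow> \<infinity>) (at_left (ereal 1))"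
    unfolding comp_assoc[symmetric] ereal_tendsto_simps using lim_h1 unfolding h_def .
  note sub = interval_integral_substitution_nonneg[OF p1 p2 p3 p4 p5 p6 p7 p8 fgI]
  show I: "integrable lborel (E \<theta>)"
    using sub(1) by (simp add: set_integrable_def)
  have "(\<integral>x. E \<theta> x \<partial>lborel) = (LBINT x=-\<infinity>..\<infinity>. E \<theta> x)"
    by (simp add: interval_lebesgue_integral_def set_lebesgue_integral_def)
  also have "\<dots> = (LBINT t=ereal 0..ereal 1. E \<theta> (h t) * h' t)"
    using sub(2) by simp
  also have "\<dots> = (LBINT t=ereal 0..ereal 1. B t)"
    by (rule interval_integral_cong) (auto simp: fgB einterval_eq)
  also have "\<dots> = (LBINT t : {0..1}. B t)"
    using interval_integral_Icc[of 0 1 B] by simp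
  also have "\<dots> = integral {0..1} B"
    by (rule set_borel_integral_eq_integral(2)[OF BI])
  also have "\<dots> = C * Beta (bb \<theta>) (aa \<theta>)"
    using Bint by (rule integral_unique)
  also have "\<dots> = K \<theta>"
  proof -
    have ab: "bb \<theta> + aa \<theta> = fst \<theta>" by (simp add: aa_def bb_def field_simps)
    show ?thesis unfolding K_def LK_def C_def Beta_def ab
      using pos by (simp add: Gamma_real_pos_exp exp_add exp_diff)
  qed
  finally show "(\<integral>x. E \<theta> x \<partial>lborel) = K \<theta>" .
qed

definition Ddet :: "real \<times> real \<Rightarrow> real" where
  "Ddet \<theta> = Dn [1,1] \<theta> * Dn [2,2] \<theta> - Dn [1,2] \<theta> * Dn [2,1] \<theta>"
definition adj :: "nat \<Rightarrow> nat \<Rightarrow> real \<times> real \<Rightarrow> real" where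
  "adj s k \<theta> = (if s = 1 \<and> k = 1 then Dn [2,2] \<theta> else if s = 2 \<and> k = 2 then Dn [1,1] \<theta> else - Dn [s,k] \<theta>)"
definition dadj :: "nat \<Rightarrow> nat \<Rightarrow> nat \<Rightarrow> real \<times> real \<Rightarrow> real" where
  "dadj l s k \<theta> = (if s = 1 \<and> k = 1 then Dn [l,2,2] \<theta> else if s = 2 \<and> k = 2 then Dn [l,1,1] \<theta> else - Dn [l,s,k] \<theta>)"
definition dDet :: "nat \<Rightarrow> real \<times> real \<Rightarrow> real" where
  "dDet l \<theta> = Dn [1,1] \<theta> * Dn [l,2,2] \<theta> + Dn [l,1,1] \<theta> * Dn [2,2] \<theta>
      - (Dn [1,2] \<theta> * Dn [l,2,1] \<theta> + Dn [l,1,2] \<theta> * Dn [2,1] \<theta>)"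
definition GI :: "nat \<Rightarrow> nat \<Rightarrow> real \<times> real \<Rightarrow> real" where
  "GI s k \<theta> = adj s k \<theta> / Ddet \<theta>"
definition dGI :: "nat \<Rightarrow> nat \<Rightarrow> nat \<Rightarrow> real \<times> real \<Rightarrow> real" where
  "dGI l s k \<theta> = - (\<Sum>a\<in>idx. \<Sum>b\<in>idx. GI s a \<theta> * Dn [l,a,b] \<theta> * GI b k \<theta>)"
definition CU :: "real \<Rightarrow> nat \<Rightarrow> nat \<Rightarrow> nat \<Rightarrow> real \<times> real \<Rightarrow> real" where
  "CU \<alpha> i j k \<theta> = (\<Sum>s\<in>idx. (1 - \<alpha>) / 2 * Dn [i,j,s] \<theta> * GI s k \<theta>)"
definition dCU :: "real \<Rightarrow> nat \<Rightarrow> nat \<Rightarrow> nat \<Rightarrow> nat \<Rightarrow> real \<times> real \<Rightarrow> real" where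
  "dCU \<alpha> l i j k \<theta> = (\<Sum>s\<in>idx. (1 - \<alpha>) / 2 * (Dn [l,i,j,s] \<theta> * GI s k \<theta> + Dn [i,j,s] \<theta> * dGI l s k \<theta>))"

lemma idx_cases: "i \<in> idx \<Longrightarrow> i = 1 \<or> i = 2" by (auto simp: idx_def)

lemma Dn_deriv': "\<theta> \<in> Theta \<Longrightarrow> l \<in> idx \<Longrightarrow>
   ((\<lambda>t. Dn [i,j] (upd l t \<theta>)) has_real_derivative Dn [l,i,j] \<theta>) (at (comp l \<theta>))"
  by (rule Dn_deriv) auto

lemma adj_deriv:
  assumes "\<theta> \<in> Theta" "l \<in> idx"
  shows "((\<lambda>t. adj s k (upd l t \<theta>)) has_real_derivative dadj l s k \<theta>) (at (comp l \<theta>))"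
proof (cases "s = 1 \<and> k = 1")
  case True
  then show ?thesis unfolding adj_def dadj_def using Dn_deriv'[OF assms] by simp
next
  case F1: False
  show ?thesis
  proof (cases "s = 2 \<and> k = 2")
    case True
    then show ?thesis unfolding adj_def dadj_def using Dn_deriv'[OF assms] by simp
  next
    case False
    have e1: "\<And>\<eta>. adj s k \<eta> = - Dn [s,k] \<eta>" using F1 False unfolding adj_def by auto
    have e2: "dadj l s k \<theta> = - Dn [l,s,k] \<theta>" using F1 False unfolding dadj_def by auto
    show ?thesis unfolding e1 e2 by (intro DERIV_minus Dn_deriv'[OF assms])
  qed
qed

lemma Ddet_deriv:
  assumes "\<theta> \<in> Theta" "l \<in> idx"
  shows "((\<lambda>t. Ddet (upd l t \<theta>)) has_real_derivative dDet l \<theta>) (at (comp l \<theta>))"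
proof -
  have A: "((\<lambda>t. Dn [1,1] (upd l t \<theta>) * Dn [2,2] (upd l t \<theta>)) has_real_derivative
      Dn [1,1] \<theta> * Dn [l,2,2] \<theta> + Dn [l,1,1] \<theta> * Dn [2,2] \<theta>) (at (comp l \<theta>))"
    using DERIV_mult'[OF Dn_deriv'[OF assms, of 1 1] Dn_deriv'[OF assms, of 2 2]] by simp
  have B: "((\<lambda>t. Dn [1,2] (upd l t \<theta>) * Dn [2,1] (upd l t \<theta>)) has_real_derivative
      Dn [1,2] \<theta> * Dn [l,2,1] \<theta> + Dn [l,1,2] \<theta> * Dn [2,1] \<theta>) (at (comp l \<theta>))"
    using DERIV_mult'[OF Dn_deriv'[OF assms, of 1 2] Dn_deriv'[OF assms, of 2 1]] by simp
  show ?thesis unfolding Ddet_def dDet_def by (rule DERIV_diff[OF A B])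
qed

lemma Dn2_sym: "Dn [2,1] \<theta> = Dn [1,2] \<theta>"
  by (simp add: Dn_def Dv_def mult_ac)
lemma Dn3_sym: "Dn [l,2,1] \<theta> = Dn [l,1,2] \<theta>"
  by (simp add: Dn_def Dv_def mult_ac)

lemma Dn2_sym': "Dn [2, Suc 0] \<theta> = Dn [Suc 0, 2] \<theta>"
  by (simp add: Dn_def Dv_def mult_ac)
lemma Dn3_sym': "Dn [l,2,Suc 0] \<theta> = Dn [l,Suc 0,2] \<theta>"
  by (simp add: Dn_def Dv_def mult_ac)

lemma GI_deriv:
  assumes "\<theta> \<in> Theta" "l \<in> idx" "Ddet \<theta> \<noteq> 0" "s \<in> idx" "k \<in> idx"
  shows "((\<lambda>t. GI s k (upd l t \<theta>)) has_real_derivative dGI l s k \<theta>) (at (comp l \<theta>))"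
proof -
  have "((\<lambda>t. GI s k (upd l t \<theta>)) has_real_derivative
     (dadj l s k \<theta> * Ddet \<theta> - adj s k \<theta> * dDet l \<theta>) / (Ddet \<theta> * Ddet \<theta>)) (at (comp l \<theta>))"
    unfolding GI_def using DERIV_divide[OF adj_deriv[OF assms(1,2)] Ddet_deriv[OF assms(1,2)]] assms(3)
    by simp
  moreover have "(dadj l s k \<theta> * Ddet \<theta> - adj s k \<theta> * dDet l \<theta>) / (Ddet \<theta> * Ddet \<theta>) = dGI l s k \<theta>"
    using idx_cases[OF assms(4)] idx_cases[OF assms(5)] assms(3)
    apply (elim disjE)
    apply (simp_all add: dGI_def GI_def dadj_def adj_def dDet_def idx_def Dn2_sym' Dn3_sym')
    apply (simp_all add: field_simps)
    apply (simp_all add: Ddet_def Dn2_sym' algebra_simps power2_eq_square)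
    done
  ultimately show ?thesis by simp
qed

definition Hyp :: bool where
  "Hyp \<longleftrightarrow> (\<forall>\<theta>\<in>Theta. (\<forall>i\<in>idx. \<forall>j\<in>idx. fisher i j \<theta> = Dn [i,j] \<theta>)
      \<and> (\<forall>i\<in>idx. \<forall>j\<in>idx. \<forall>k\<in>idx. skew i j k \<theta> = Dn [i,j,k] \<theta>) \<and> Ddet \<theta> > 0)"

lemma Dn3_perm: "Dn [j,k,i] \<theta> = Dn [i,j,k] \<theta>" "Dn [k,i,j] \<theta> = Dn [i,j,k] \<theta>"
  by (simp_all add: Dn_def Dv_def mult_ac)
lemma Dn4_sym: "Dn [j,i,k,s] \<theta> = Dn [i,j,k,s] \<theta>"
  by (simp_all add: Dn_def Dv_def mult_ac)

context
  fixes \<theta> :: "real \<times> real"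
  assumes H: Hyp and T: "\<theta> \<in> Theta"
begin

lemma fisher_eq: "\<eta> \<in> Theta \<Longrightarrow> i \<in> idx \<Longrightarrow> j \<in> idx \<Longrightarrow> fisher i j \<eta> = Dn [i,j] \<eta>"
  using H unfolding Hyp_def by blast
lemma skew_eq: "i \<in> idx \<Longrightarrow> j \<in> idx \<Longrightarrow> k \<in> idx \<Longrightarrow> skew i j k \<theta> = Dn [i,j,k] \<theta>"
  using H T unfolding Hyp_def by blast
lemma Ddet_pos: "Ddet \<theta> > 0"
  using H T unfolding Hyp_def by blast

lemma pd_fisher: "i \<in> idx \<Longrightarrow> j \<in> idx \<Longrightarrow> k \<in> idx \<Longrightarrow> pd i (fisher j k) \<theta> = Dn [i,j,k] \<theta>"
  by (rule pd_eq[OF T, where H="Dn [j,k]"]) (auto simp: fisher_eq intro: Dn_deriv'[OF T])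

lemma LC_eq: "i \<in> idx \<Longrightarrow> j \<in> idx \<Longrightarrow> k \<in> idx \<Longrightarrow> LC i j k \<theta> = Dn [i,j,k] \<theta> / 2"
  unfolding LC_def by (simp add: pd_fisher Dn3_perm)

lemma conn_eq: "i \<in> idx \<Longrightarrow> j \<in> idx \<Longrightarrow> k \<in> idx \<Longrightarrow> conn \<alpha> i j k \<theta> = (1 - \<alpha>) / 2 * Dn [i,j,k] \<theta>"
  unfolding conn_def by (simp add: LC_eq skew_eq algebra_simps)

lemma fdet_eq: "\<eta> \<in> Theta \<Longrightarrow> fisher_det \<eta> = Ddet \<eta>"
  unfolding fisher_det_def Ddet_def by (simp add: fisher_eq idx_def)

lemma finv_eq: "\<eta> \<in> Theta \<Longrightarrow> s \<in> idx \<Longrightarrow> k \<in> idx \<Longrightarrow> fisher_inv s k \<eta> = GI s k \<eta>"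
  unfolding fisher_inv_def GI_def adj_def by (simp add: fisher_eq fdet_eq idx_def)

lemma conn_up_eq: "\<eta> \<in> Theta \<Longrightarrow> i \<in> idx \<Longrightarrow> j \<in> idx \<Longrightarrow> k \<in> idx \<Longrightarrow> conn_up \<alpha> i j k \<eta> = CU \<alpha> i j k \<eta>"
proof -
  assume a: "\<eta> \<in> Theta" "i \<in> idx" "j \<in> idx" "k \<in> idx"
  have "conn \<alpha> i j s \<eta> = (1 - \<alpha>) / 2 * Dn [i,j,s] \<eta>" if "s \<in> idx" for s
  proof -
    have "LC i j s \<eta> = Dn [i,j,s] \<eta> / 2"
    proof -
      have "pd i' (fisher j' k') \<eta> = Dn [i',j',k'] \<eta>" if "i' \<in> idx" "j' \<in> idx" "k' \<in> idx" for i' j' k'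
        by (rule pd_eq[OF a(1), where H="Dn [j',k']"]) (use that a in \<open>auto simp: fisher_eq intro: Dn_deriv'\<close>)
      then show ?thesis unfolding LC_def using a that by (simp add: Dn3_perm)
    qed
    moreover have "skew i j s \<eta> = Dn [i,j,s] \<eta>" using H a that unfolding Hyp_def by blast
    ultimately show ?thesis unfolding conn_def by (simp add: algebra_simps)
  qed
  then show ?thesis unfolding conn_up_def CU_def using a
    by (intro sum.cong refl) (simp add: finv_eq)
qed

lemma Ddet_nz: "Ddet \<theta> \<noteq> 0" using Ddet_pos by simp

lemma pd_conn_up: "l \<in> idx \<Longrightarrow> j \<in> idx \<Longrightarrow> k \<in> idx \<Longrightarrow> n \<in> idx \<Longrightarrow>
   pd l (conn_up \<alpha> j k n) \<theta> = dCU \<alpha> l j k n \<theta>"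
proof -
  assume a: "l \<in> idx" "j \<in> idx" "k \<in> idx" "n \<in> idx"
  have d: "((\<lambda>t. (1 - \<alpha>) / 2 * Dn [j,k,s] (upd l t \<theta>) * GI s n (upd l t \<theta>)) has_real_derivative
      (1 - \<alpha>) / 2 * (Dn [l,j,k,s] \<theta> * GI s n \<theta> + Dn [j,k,s] \<theta> * dGI l s n \<theta>)) (at (comp l \<theta>))"
    if s: "s \<in> idx" for s
  proof -
    have "((\<lambda>t. (1 - \<alpha>) / 2 * (Dn [j,k,s] (upd l t \<theta>) * GI s n (upd l t \<theta>))) has_real_derivative
      (1 - \<alpha>) / 2 * (Dn [j,k,s] (upd l (comp l \<theta>) \<theta>) * dGI l s n \<theta> + Dn (l # [j,k,s]) \<theta> * GI s n (upd l (comp l \<theta>) \<theta>))) (at (comp l \<theta>))"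
      by (intro DERIV_cmult DERIV_mult' Dn_deriv[OF T a(1)] GI_deriv[OF T a(1) Ddet_nz s a(4)]) simp
    then show ?thesis by (simp add: algebra_simps)
  qed
  have "((\<lambda>t. CU \<alpha> j k n (upd l t \<theta>)) has_real_derivative dCU \<alpha> l j k n \<theta>) (at (comp l \<theta>))"
    unfolding CU_def dCU_def by (rule DERIV_sum) (rule d)
  then show ?thesis
    by (rule pd_eq[OF T, rotated]) (simp add: conn_up_eq a)
qed

lemma curv_up_eq: "i \<in> idx \<Longrightarrow> j \<in> idx \<Longrightarrow> k \<in> idx \<Longrightarrow> n \<in> idx \<Longrightarrow>
  curv_up \<alpha> i j k n \<theta> = ((1 - \<alpha>)^2 / 4 - (1 - \<alpha>) / 2) *
    (\<Sum>s\<in>idx. \<Sum>a\<in>idx. \<Sum>b\<in>idx. (Dn [j,k,s] \<theta> * GI s a \<theta> * Dn [i,a,b] \<theta> * GI b n \<theta>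
        - Dn [i,k,s] \<theta> * GI s a \<theta> * Dn [j,a,b] \<theta> * GI b n \<theta>))"
proof -
  assume a: "i \<in> idx" "j \<in> idx" "k \<in> idx" "n \<in> idx"
  have cu: "conn_up \<alpha> x y z \<theta> = CU \<alpha> x y z \<theta>" if "x \<in> idx" "y \<in> idx" "z \<in> idx" for x y z
    using conn_up_eq[OF T that] .
  have e: "(\<Sum>m\<in>idx. conn_up \<alpha> j k m \<theta> * conn_up \<alpha> i m n \<theta> - conn_up \<alpha> i k m \<theta> * conn_up \<alpha> j m n \<theta>)
     = (\<Sum>m\<in>idx. CU \<alpha> j k m \<theta> * CU \<alpha> i m n \<theta> - CU \<alpha> i k m \<theta> * CU \<alpha> j m n \<theta>)"
    by (rule sum.cong) (use a in \<open>auto simp: cu\<close>)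
  show ?thesis
    unfolding curv_up_def e pd_conn_up[OF a(1,2,3,4)] pd_conn_up[OF a(2,1,3,4)]
    unfolding dCU_def CU_def dGI_def
    by (simp add: idx_def Dn4_sym[of j i] power2_eq_square algebra_simps)
qed

lemma GI_G: "b \<in> idx \<Longrightarrow> l \<in> idx \<Longrightarrow> (\<Sum>n\<in>idx. GI b n \<theta> * Dn [n,l] \<theta>) = (if b = l then 1 else 0)"
proof -
  assume "b \<in> idx" "l \<in> idx"
  then have "b = 1 \<or> b = 2" "l = 1 \<or> l = 2" by (auto simp: idx_def)
  then show ?thesis
    apply (elim disjE)
    apply (simp_all add: idx_def GI_def adj_def Dn2_sym')
    apply (simp_all add: divide_simps Ddet_nz)
    apply (simp_all add: Ddet_def Dn2_sym' algebra_simps)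
    done
qed

end

definition Mo :: "nat \<Rightarrow> nat \<Rightarrow> real \<times> real \<Rightarrow> real" where
  "Mo k l \<theta> = (\<integral>x. Y1 x ^ k * x ^ l * E \<theta> x \<partial>lborel)"

definition MP :: "nat \<Rightarrow> nat \<Rightarrow> (real \<times> real \<Rightarrow> real) \<Rightarrow> bool" where
  "MP k l G \<longleftrightarrow> (\<forall>\<eta>\<in>Theta. integrable lborel (\<lambda>x. Y1 x ^ k * x ^ l * E \<eta> x) \<and> Mo k l \<eta> = G \<eta>)"

lemma upd1: "upd 1 s \<theta> = (s, snd \<theta>)" and upd2: "upd 2 s \<theta> = (fst \<theta>, s)"
  by (simp_all add: upd_def)
lemma comp1: "comp 1 \<theta> = fst \<theta>" and comp2: "comp 2 \<theta> = snd \<theta>"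
  by (simp_all add: comp_def)

lemma step1:
  assumes IH: "\<forall>\<eta>\<in>Theta. integrable lborel (\<lambda>x. Y1 x ^ k * x ^ l * E \<eta> x)" and T: "\<theta> \<in> Theta"
  shows "integrable lborel (\<lambda>x. Y1 x ^ Suc k * x ^ l * E \<theta> x)"
    "((\<lambda>t. Mo k l (upd 1 t \<theta>)) has_real_derivative Mo (Suc k) l \<theta>) (at (comp 1 \<theta>))"
proof -
  define f where "f x = Y1 x ^ k * x ^ l * exp (snd \<theta> * x)" for x
  have e1: "f x * exp (s * Y1 x) = Y1 x ^ k * x ^ l * E (upd 1 s \<theta>) x" for s x
    unfolding f_def E_def upd1 by (simp add: mult_exp_exp algebra_simps)
  have e2: "f x * Y1 x * exp (fst \<theta> * Y1 x) = Y1 x ^ Suc k * x ^ l * E \<theta> x" for x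
    unfolding f_def E_def by (simp add: mult_exp_exp algebra_simps)
  have I: "open {s. upd 1 s \<theta> \<in> Theta}" "fst \<theta> \<in> {s. upd 1 s \<theta> \<in> Theta}"
    using open_line[of 1 \<theta>] T by (auto simp: upd_def)
  have mf: "f \<in> borel_measurable borel" unfolding f_def by measurable
  have int: "integrable lborel (\<lambda>x. f x * exp (s * Y1 x))" if "s \<in> {s. upd 1 s \<theta> \<in> Theta}" for s
    unfolding e1 using IH that by auto
  note D = deriv_int[OF I mf Y1_meas int]
  show "integrable lborel (\<lambda>x. Y1 x ^ Suc k * x ^ l * E \<theta> x)" using D(1) unfolding e2 .
  show "((\<lambda>t. Mo k l (upd 1 t \<theta>)) has_real_derivative Mo (Suc k) l \<theta>) (at (comp 1 \<theta>))"
    using D(2) unfolding e1 e2 Mo_def comp1 .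
qed

lemma step2:
  assumes IH: "\<forall>\<eta>\<in>Theta. integrable lborel (\<lambda>x. Y1 x ^ k * x ^ l * E \<eta> x)" and T: "\<theta> \<in> Theta"
  shows "integrable lborel (\<lambda>x. Y1 x ^ k * x ^ Suc l * E \<theta> x)"
    "((\<lambda>t. Mo k l (upd 2 t \<theta>)) has_real_derivative Mo k (Suc l) \<theta>) (at (comp 2 \<theta>))"
proof -
  define f where "f x = Y1 x ^ k * x ^ l * exp (fst \<theta> * Y1 x)" for x
  have e1: "f x * exp (s * id x) = Y1 x ^ k * x ^ l * E (upd 2 s \<theta>) x" for s x
    unfolding f_def E_def upd2 by (simp add: mult_exp_exp algebra_simps)
  have e2: "f x * id x * exp (snd \<theta> * id x) = Y1 x ^ k * x ^ Suc l * E \<theta> x" for x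
    unfolding f_def E_def by (simp add: mult_exp_exp algebra_simps)
  have I: "open {s. upd 2 s \<theta> \<in> Theta}" "snd \<theta> \<in> {s. upd 2 s \<theta> \<in> Theta}"
    using open_line[of 2 \<theta>] T by (auto simp: upd_def)
  have mf: "f \<in> borel_measurable borel" unfolding f_def by measurable
  have mid: "id \<in> borel_measurable borel" by measurable
  have int: "integrable lborel (\<lambda>x. f x * exp (s * id x))" if "s \<in> {s. upd 2 s \<theta> \<in> Theta}" for s
    unfolding e1 using IH that by auto
  note D = deriv_int[OF I mf mid int]
  show "integrable lborel (\<lambda>x. Y1 x ^ k * x ^ Suc l * E \<theta> x)" using D(1) unfolding e2 .
  show "((\<lambda>t. Mo k l (upd 2 t \<theta>)) has_real_derivative Mo k (Suc l) \<theta>) (at (comp 2 \<theta>))"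
    using D(2) unfolding e1 e2 Mo_def comp2 .
qed

lemma transfer:
  assumes T: "\<theta> \<in> Theta" and EQ: "\<And>\<eta>. \<eta> \<in> Theta \<Longrightarrow> F \<eta> = G \<eta>"
    and DF: "((\<lambda>t. F (upd l t \<theta>)) has_real_derivative A) (at (comp l \<theta>))"
    and DG: "((\<lambda>t. G (upd l t \<theta>)) has_real_derivative B) (at (comp l \<theta>))"
  shows "A = B"
proof -
  have "pd l F \<theta> = B" by (rule pd_eq[OF T EQ DG])
  moreover have "pd l F \<theta> = A" unfolding pd_def by (rule DERIV_imp_deriv[OF DF])
  ultimately show ?thesis by simp
qed

lemma MP_step1:
  assumes IH: "MP k l G"
    and DG: "\<And>\<theta>. \<theta> \<in> Theta \<Longrightarrow> ((\<lambda>t. G (upd 1 t \<theta>)) has_real_derivative G' \<theta>) (at (comp 1 \<theta>))"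
  shows "MP (Suc k) l G'"
  unfolding MP_def
proof
  fix \<theta> assume T: "\<theta> \<in> Theta"
  have I: "\<forall>\<eta>\<in>Theta. integrable lborel (\<lambda>x. Y1 x ^ k * x ^ l * E \<eta> x)" using IH unfolding MP_def by blast
  note S = step1[OF I T]
  have "Mo (Suc k) l \<theta> = G' \<theta>"
    by (rule transfer[OF T _ S(2) DG[OF T]]) (use IH in \<open>auto simp: MP_def\<close>)
  then show "integrable lborel (\<lambda>x. Y1 x ^ Suc k * x ^ l * E \<theta> x) \<and> Mo (Suc k) l \<theta> = G' \<theta>"
    using S(1) by simp
qed

lemma MP_step2:
  assumes IH: "MP k l G"
    and DG: "\<And>\<theta>. \<theta> \<in> Theta \<Longrightarrow> ((\<lambda>t. G (upd 2 t \<theta>)) has_real_derivative G' \<theta>) (at (comp 2 \<theta>))"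
  shows "MP k (Suc l) G'"
  unfolding MP_def
proof
  fix \<theta> assume T: "\<theta> \<in> Theta"
  have I: "\<forall>\<eta>\<in>Theta. integrable lborel (\<lambda>x. Y1 x ^ k * x ^ l * E \<eta> x)" using IH unfolding MP_def by blast
  note S = step2[OF I T]
  have "Mo k (Suc l) \<theta> = G' \<theta>"
    by (rule transfer[OF T _ S(2) DG[OF T]]) (use IH in \<open>auto simp: MP_def\<close>)
  then show "integrable lborel (\<lambda>x. Y1 x ^ k * x ^ Suc l * E \<theta> x) \<and> Mo k (Suc l) \<theta> = G' \<theta>"
    using S(1) by simp
qed

lemma MP00: "MP 0 0 K"
  unfolding MP_def Mo_def using norm_int by simp

lemma K_deriv_eq: "\<theta> \<in> Theta \<Longrightarrow> l \<in> idx \<Longrightarrow> X = K \<theta> * Dn1 l \<theta> \<Longrightarrow>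
  ((\<lambda>t. K (upd l t \<theta>)) has_real_derivative X) (at (comp l \<theta>))"
  using K_deriv by simp
lemma Dn1_deriv_eq: "\<theta> \<in> Theta \<Longrightarrow> l \<in> idx \<Longrightarrow> X = Dn [l,i] \<theta> \<Longrightarrow>
  ((\<lambda>t. Dn1 i (upd l t \<theta>)) has_real_derivative X) (at (comp l \<theta>))"
  using Dn1_deriv by simp
lemma Dn_deriv_eq: "\<theta> \<in> Theta \<Longrightarrow> l \<in> idx \<Longrightarrow> is \<noteq> [] \<Longrightarrow> X = Dn (l # is) \<theta> \<Longrightarrow>
  ((\<lambda>t. Dn is (upd l t \<theta>)) has_real_derivative X) (at (comp l \<theta>))"
  using Dn_deriv by simp

lemma idx1: "1 \<in> idx" and idx2: "2 \<in> idx" by (simp_all add: idx_def)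

lemmas dints = K_deriv_eq Dn1_deriv_eq Dn_deriv_eq

lemma DnS: "Dn [2,1] \<theta> = Dn [1,2] \<theta>" "Dn [2,1,1] \<theta> = Dn [1,1,2] \<theta>" "Dn [1,2,1] \<theta> = Dn [1,1,2] \<theta>"
  "Dn [2,1,2] \<theta> = Dn [1,2,2] \<theta>" "Dn [2,2,1] \<theta> = Dn [1,2,2] \<theta>"
  by (simp_all add: Dn_def Dv_def)
lemmas DnS' = DnS[unfolded One_nat_def]

definition "G10 \<eta> = K \<eta> * Dn1 1 \<eta>"
definition "G01 \<eta> = K \<eta> * Dn1 2 \<eta>"
definition "G20 \<eta> = K \<eta> * (Dn [1,1] \<eta> + Dn1 1 \<eta> * Dn1 1 \<eta>)"
definition "G11 \<eta> = K \<eta> * (Dn [1,2] \<eta> + Dn1 1 \<eta> * Dn1 2 \<eta>)"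
definition "G02 \<eta> = K \<eta> * (Dn [2,2] \<eta> + Dn1 2 \<eta> * Dn1 2 \<eta>)"
definition "G30 \<eta> = K \<eta> * (Dn [1,1,1] \<eta> + 3 * Dn1 1 \<eta> * Dn [1,1] \<eta> + Dn1 1 \<eta> * Dn1 1 \<eta> * Dn1 1 \<eta>)"
definition "G21 \<eta> = K \<eta> * (Dn [1,1,2] \<eta> + 2 * Dn1 1 \<eta> * Dn [1,2] \<eta> + Dn1 2 \<eta> * Dn [1,1] \<eta> + Dn1 1 \<eta> * Dn1 1 \<eta> * Dn1 2 \<eta>)"
definition "G12 \<eta> = K \<eta> * (Dn [1,2,2] \<eta> + 2 * Dn1 2 \<eta> * Dn [1,2] \<eta> + Dn1 1 \<eta> * Dn [2,2] \<eta> + Dn1 1 \<eta> * Dn1 2 \<eta> * Dn1 2 \<eta>)"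
definition "G03 \<eta> = K \<eta> * (Dn [2,2,2] \<eta> + 3 * Dn1 2 \<eta> * Dn [2,2] \<eta> + Dn1 2 \<eta> * Dn1 2 \<eta> * Dn1 2 \<eta>)"

lemma MP10: "MP 1 0 G10"
proof -
  have "MP (Suc 0) 0 G10"
    by (rule MP_step1[OF MP00]) (unfold G10_def, rule K_deriv, simp_all add: idx_def)
  then show ?thesis by simp
qed
lemma MP01: "MP 0 1 G01"
proof -
  have "MP 0 (Suc 0) G01"
    by (rule MP_step2[OF MP00]) (unfold G01_def, rule K_deriv, simp_all add: idx_def)
  then show ?thesis by simp
qed

lemma MP20: "MP 2 0 G20"
proof -
  have "MP (Suc 1) 0 G20"
    by (rule MP_step1[OF MP10]) (unfold G10_def G20_def, auto intro!: derivative_eq_intros dints simp: idx_def algebra_simps)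
  then show ?thesis by (simp add: numeral_2_eq_2)
qed

lemma MP11: "MP 1 1 G11"
proof -
  have "MP 1 (Suc 0) G11"
    by (rule MP_step2[OF MP10]) (unfold G10_def G11_def, auto intro!: derivative_eq_intros dints simp: idx_def algebra_simps DnS DnS')
  then show ?thesis by simp
qed

lemma MP02: "MP 0 2 G02"
proof -
  have "MP 0 (Suc 1) G02"
    by (rule MP_step2[OF MP01]) (unfold G01_def G02_def, auto intro!: derivative_eq_intros dints simp: idx_def algebra_simps)
  then show ?thesis by (simp add: numeral_2_eq_2)
qed

lemma MP30: "MP 3 0 G30"
proof -
  have "MP (Suc 2) 0 G30"
    by (rule MP_step1[OF MP20]) (unfold G20_def G30_def, auto intro!: derivative_eq_intros dints simp: idx_def algebra_simps DnS DnS')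
  then show ?thesis by (simp add: numeral_3_eq_3)
qed

lemma MP21: "MP 2 1 G21"
proof -
  have "MP 2 (Suc 0) G21"
    by (rule MP_step2[OF MP20]) (unfold G20_def G21_def, auto intro!: derivative_eq_intros dints simp: idx_def algebra_simps DnS DnS')
  then show ?thesis by simp
qed

lemma MP12: "MP 1 2 G12"
proof -
  have "MP (Suc 0) 2 G12"
    by (rule MP_step1[OF MP02]) (unfold G02_def G12_def, auto intro!: derivative_eq_intros dints simp: idx_def algebra_simps DnS DnS')
  then show ?thesis by simp
qed

lemma MP03: "MP 0 3 G03"
proof -
  have "MP 0 (Suc 2) G03"
    by (rule MP_step2[OF MP02]) (unfold G02_def G03_def, auto intro!: derivative_eq_intros dints simp: idx_def algebra_simps DnS DnS')
  then show ?thesis by (simp add: numeral_3_eq_3)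
qed

lemma MP_use:
  assumes "MP k l G" "\<theta> \<in> Theta" "\<And>x. f x = Y1 x ^ k * x ^ l * E \<theta> x"
  shows "integrable lborel f" "(\<integral>x. f x \<partial>lborel) = G \<theta>"
proof -
  have f: "f = (\<lambda>x. Y1 x ^ k * x ^ l * E \<theta> x)" using assms(3) by auto
  show "integrable lborel f" "(\<integral>x. f x \<partial>lborel) = G \<theta>"
    using assms(1,2) unfolding f MP_def Mo_def by auto
qed

context
  fixes \<theta> :: "real \<times> real"
  assumes T: "\<theta> \<in> Theta"
begin

lemma G0: "integrable lborel (\<lambda>x. E \<theta> x)" "(\<integral>x. E \<theta> x \<partial>lborel) = K \<theta>"
  using MP_use[OF MP00 T, of "\<lambda>x. E \<theta> x"] by simp_all

lemma G1: assumes "i \<in> idx"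
  shows "integrable lborel (\<lambda>x. Yc i x * E \<theta> x)" "(\<integral>x. Yc i x * E \<theta> x \<partial>lborel) = K \<theta> * Dn1 i \<theta>"
proof -
  have "i = 1 \<or> i = 2" using assms by (auto simp: idx_def)
  then have "integrable lborel (\<lambda>x. Yc i x * E \<theta> x) \<and> (\<integral>x. Yc i x * E \<theta> x \<partial>lborel) = K \<theta> * Dn1 i \<theta>"
  proof
    assume i: "i = 1"
    show ?thesis using MP_use[OF MP10 T, of "\<lambda>x. Yc i x * E \<theta> x"] i by (simp add: Yc_def G10_def)
  next
    assume i: "i = 2"
    show ?thesis using MP_use[OF MP01 T, of "\<lambda>x. Yc i x * E \<theta> x"] i by (simp add: Yc_def G01_def)
  qed
  then show "integrable lborel (\<lambda>x. Yc i x * E \<theta> x)" "(\<integral>x. Yc i x * E \<theta> x \<partial>lborel) = K \<theta> * Dn1 i \<theta>"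
    by auto
qed

lemma G2: assumes "i \<in> idx" "j \<in> idx"
  shows "integrable lborel (\<lambda>x. Yc i x * Yc j x * E \<theta> x) \<and>
    (\<integral>x. Yc i x * Yc j x * E \<theta> x \<partial>lborel) = K \<theta> * (Dn [i,j] \<theta> + Dn1 i \<theta> * Dn1 j \<theta>)"
proof -
  have "i = 1 \<or> i = 2" "j = 1 \<or> j = 2" using assms by (auto simp: idx_def)
  then show ?thesis
  proof (elim disjE)
    assume "i = 1" "j = 1" then show ?thesis
      using MP_use[OF MP20 T, of "\<lambda>x. Yc i x * Yc j x * E \<theta> x"] by (simp add: Yc_def G20_def power2_eq_square)
  next
    assume "i = 1" "j = 2" then show ?thesis
      using MP_use[OF MP11 T, of "\<lambda>x. Yc i x * Yc j x * E \<theta> x"] by (simp add: Yc_def G11_def)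
  next
    assume "i = 2" "j = 1" then show ?thesis
      using MP_use[OF MP11 T, of "\<lambda>x. Yc i x * Yc j x * E \<theta> x"] by (simp add: Yc_def G11_def DnS DnS' mult_ac)
  next
    assume "i = 2" "j = 2" then show ?thesis
      using MP_use[OF MP02 T, of "\<lambda>x. Yc i x * Yc j x * E \<theta> x"] by (simp add: Yc_def G02_def power2_eq_square)
  qed
qed

lemma G3: assumes "i \<in> idx" "j \<in> idx" "k \<in> idx"
  shows "integrable lborel (\<lambda>x. Yc i x * Yc j x * Yc k x * E \<theta> x) \<and>
    (\<integral>x. Yc i x * Yc j x * Yc k x * E \<theta> x \<partial>lborel) = K \<theta> * (Dn [i,j,k] \<theta> + Dn1 i \<theta> * Dn [j,k] \<theta>
      + Dn1 j \<theta> * Dn [i,k] \<theta> + Dn1 k \<theta> * Dn [i,j] \<theta> + Dn1 i \<theta> * Dn1 j \<theta> * Dn1 k \<theta>)"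
proof -
  have "i = 1 \<or> i = 2" "j = 1 \<or> j = 2" "k = 1 \<or> k = 2" using assms by (auto simp: idx_def)
  then show ?thesis
  proof (elim disjE)
    assume "i = 1" "j = 1" "k = 1" then show ?thesis
      using MP_use[OF MP30 T, of "\<lambda>x. Yc i x * Yc j x * Yc k x * E \<theta> x"]
      by (simp add: Yc_def G30_def power3_eq_cube algebra_simps)
  next
    assume "i = 1" "j = 1" "k = 2" then show ?thesis
      using MP_use[OF MP21 T, of "\<lambda>x. Yc i x * Yc j x * Yc k x * E \<theta> x"]
      by (simp add: Yc_def G21_def power2_eq_square DnS DnS' algebra_simps)
  next
    assume "i = 1" "j = 2" "k = 1" then show ?thesis
      using MP_use[OF MP21 T, of "\<lambda>x. Yc i x * Yc j x * Yc k x * E \<theta> x"]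
      by (simp add: Yc_def G21_def power2_eq_square DnS DnS' algebra_simps)
  next
    assume "i = 1" "j = 2" "k = 2" then show ?thesis
      using MP_use[OF MP12 T, of "\<lambda>x. Yc i x * Yc j x * Yc k x * E \<theta> x"]
      by (simp add: Yc_def G12_def power2_eq_square DnS DnS' algebra_simps)
  next
    assume "i = 2" "j = 1" "k = 1" then show ?thesis
      using MP_use[OF MP21 T, of "\<lambda>x. Yc i x * Yc j x * Yc k x * E \<theta> x"]
      by (simp add: Yc_def G21_def power2_eq_square DnS DnS' algebra_simps)
  next
    assume "i = 2" "j = 1" "k = 2" then show ?thesis
      using MP_use[OF MP12 T, of "\<lambda>x. Yc i x * Yc j x * Yc k x * E \<theta> x"]
      by (simp add: Yc_def G12_def power2_eq_square DnS DnS' algebra_simps)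
  next
    assume "i = 2" "j = 2" "k = 1" then show ?thesis
      using MP_use[OF MP12 T, of "\<lambda>x. Yc i x * Yc j x * Yc k x * E \<theta> x"]
      by (simp add: Yc_def G12_def power2_eq_square DnS DnS' algebra_simps)
  next
    assume "i = 2" "j = 2" "k = 2" then show ?thesis
      using MP_use[OF MP03 T, of "\<lambda>x. Yc i x * Yc j x * Yc k x * E \<theta> x"]
      by (simp add: Yc_def G03_def power3_eq_cube algebra_simps)
  qed
qed

end

lemma cm2:
  fixes A B e :: "real \<Rightarrow> real"
  assumes "integrable M (\<lambda>x. A x * B x * e x)" "integrable M (\<lambda>x. A x * e x)" "integrable M (\<lambda>x. B x * e x)" "integrable M e"
  shows "(\<integral>x. (A x - a) * (B x - b) * (e x / c) \<partial>M) =
    ((\<integral>x. A x * B x * e x \<partial>M) - b * (\<integral>x. A x * e x \<partial>M) - a * (\<integral>x. B x * e x \<partial>M) + a * b * (\<integral>x. e x \<partial>M)) / c"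
proof -
  have "(\<lambda>x. (A x - a) * (B x - b) * (e x / c)) =
      (\<lambda>x. (A x * B x * e x - b * (A x * e x) - a * (B x * e x) + a * b * e x) / c)"
    by (rule ext, cases "c = 0") (simp_all add: field_simps)
  then show ?thesis using assms by simp
qed

lemma cm3:
  fixes A B C e :: "real \<Rightarrow> real"
  assumes "integrable M (\<lambda>x. A x * B x * C x * e x)" "integrable M (\<lambda>x. B x * C x * e x)"
    "integrable M (\<lambda>x. A x * C x * e x)" "integrable M (\<lambda>x. A x * B x * e x)"
    "integrable M (\<lambda>x. A x * e x)" "integrable M (\<lambda>x. B x * e x)" "integrable M (\<lambda>x. C x * e x)" "integrable M e"
  shows "(\<integral>x. (A x - a) * (B x - b) * (C x - c) * (e x / d) \<partial>M) =
    ((\<integral>x. A x * B x * C x * e x \<partial>M) - a * (\<integral>x. B x * C x * e x \<partial>M) - b * (\<integral>x. A x * C x * e x \<partial>M)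
     - c * (\<integral>x. A x * B x * e x \<partial>M) + a * b * (\<integral>x. C x * e x \<partial>M) + a * c * (\<integral>x. B x * e x \<partial>M)
     + b * c * (\<integral>x. A x * e x \<partial>M) - a * b * c * (\<integral>x. e x \<partial>M)) / d"
proof -
  have "(\<lambda>x. (A x - a) * (B x - b) * (C x - c) * (e x / d)) =
      (\<lambda>x. (A x * B x * C x * e x - a * (B x * C x * e x) - b * (A x * C x * e x) - c * (A x * B x * e x)
        + a * b * (C x * e x) + a * c * (B x * e x) + b * c * (A x * e x) - a * b * c * e x) / d)"
    by (rule ext, cases "d = 0") (simp_all add: field_simps)
  then show ?thesis using assms by simp
qed

lemma fisher_closed:
  assumes T: "\<theta> \<in> Theta" and ij: "i \<in> idx" "j \<in> idx"
  shows "fisher i j \<theta> = Dn [i,j] \<theta>"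
proof -
  have "fisher i j \<theta> = (\<integral>x. (Yc i x - Dn1 i \<theta>) * (Yc j x - Dn1 j \<theta>) * (E \<theta> x / K \<theta>) \<partial>lborel)"
    unfolding fisher_def by (simp add: score_eq[OF T] ij dens_eq[OF T])
  also have "\<dots> = Dn [i,j] \<theta>"
    using K_pos[of \<theta>] G2[OF T ij] G1[OF T ij(1)] G1[OF T ij(2)] G0[OF T]
    by (subst cm2) (auto simp: field_simps)
  finally show ?thesis .
qed

lemma skew_closed:
  assumes T: "\<theta> \<in> Theta" and ijk: "i \<in> idx" "j \<in> idx" "k \<in> idx"
  shows "skew i j k \<theta> = Dn [i,j,k] \<theta>"
proof -
  have "skew i j k \<theta> = (\<integral>x. (Yc i x - Dn1 i \<theta>) * (Yc j x - Dn1 j \<theta>) * (Yc k x - Dn1 k \<theta>) * (E \<theta> x / K \<theta>) \<partial>lborel)"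
    unfolding skew_def by (simp add: score_eq[OF T] ijk dens_eq[OF T])
  also have "\<dots> = Dn [i,j,k] \<theta>"
    using K_pos[of \<theta>] G3[OF T ijk] G2[OF T ijk(2,3)] G2[OF T ijk(1,3)] G2[OF T ijk(1,2)]
      G1[OF T ijk(1)] G1[OF T ijk(2)] G1[OF T ijk(3)] G0[OF T]
    by (subst cm3) (auto simp: field_simps)
  finally show ?thesis .
qed

lemma SSint:
  assumes T: "\<theta> \<in> Theta" and ij: "i \<in> idx" "j \<in> idx"
  shows "integrable lborel (\<lambda>x. (Yc i x - a) * (Yc j x - b) * (E \<theta> x / K \<theta>))"
proof -
  have e: "(\<lambda>x. (Yc i x - a) * (Yc j x - b) * (E \<theta> x / K \<theta>)) =
      (\<lambda>x. (Yc i x * Yc j x * E \<theta> x - b * (Yc i x * E \<theta> x) - a * (Yc j x * E \<theta> x) + a * b * E \<theta> x) / K \<theta>)"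
    using K_pos[of \<theta>] by (intro ext) (simp add: field_simps)
  show ?thesis unfolding e
    using G2[OF T ij] G1[OF T ij(1)] G1[OF T ij(2)] G0[OF T]
    by (intro integrable_divide_zero integrable_add integrable_diff integrable_mult_right) auto
qed

lemma fisher_int:
  assumes T: "\<theta> \<in> Theta" and ij: "i \<in> idx" "j \<in> idx"
  shows "fisher i j \<theta> = (\<integral>x. (Yc i x - Dn1 i \<theta>) * (Yc j x - Dn1 j \<theta>) * (E \<theta> x / K \<theta>) \<partial>lborel)"
  unfolding fisher_def by (simp add: score_eq[OF T] ij dens_eq[OF T])

lemma Q_pos:
  assumes T: "\<theta> \<in> Theta" and c: "c1 \<noteq> 0 \<or> c2 \<noteq> 0"
  shows "c1^2 * Dn [1,1] \<theta> + 2 * c1 * c2 * Dn [1,2] \<theta> + c2^2 * Dn [2,2] \<theta> > 0"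
proof -
  have i1: "1 \<in> idx" and i2: "2 \<in> idx" by (simp_all add: idx_def)
  define S1 where "S1 x = Y1 x - Dn1 1 \<theta>" for x
  define S2 where "S2 x = x - Dn1 2 \<theta>" for x
  define p where "p x = E \<theta> x / K \<theta>" for x
  define L where "L x = c1 * S1 x + c2 * S2 x" for x
  define h where "h x = (L x)^2 * p x" for x
  have Y1c: "Yc 1 x = Y1 x" "Yc 2 x = x" for x by (simp_all add: Yc_def)
  have I11: "integrable lborel (\<lambda>x. S1 x * S1 x * p x)"
    using SSint[OF T i1 i1, of "Dn1 1 \<theta>" "Dn1 1 \<theta>"] unfolding S1_def p_def Y1c .
  have I12: "integrable lborel (\<lambda>x. S1 x * S2 x * p x)"
    using SSint[OF T i1 i2, of "Dn1 1 \<theta>" "Dn1 2 \<theta>"] unfolding S1_def S2_def p_def Y1c .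
  have I22: "integrable lborel (\<lambda>x. S2 x * S2 x * p x)"
    using SSint[OF T i2 i2, of "Dn1 2 \<theta>" "Dn1 2 \<theta>"] unfolding S2_def p_def Y1c .
  have F11: "(\<integral>x. S1 x * S1 x * p x \<partial>lborel) = Dn [1,1] \<theta>"
    using fisher_int[OF T i1 i1] fisher_closed[OF T i1 i1] unfolding S1_def p_def Y1c by simp
  have F12: "(\<integral>x. S1 x * S2 x * p x \<partial>lborel) = Dn [1,2] \<theta>"
    using fisher_int[OF T i1 i2] fisher_closed[OF T i1 i2] unfolding S1_def S2_def p_def Y1c by simp
  have F22: "(\<integral>x. S2 x * S2 x * p x \<partial>lborel) = Dn [2,2] \<theta>"
    using fisher_int[OF T i2 i2] fisher_closed[OF T i2 i2] unfolding S2_def p_def Y1c by simp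
  have he: "h = (\<lambda>x. c1^2 * (S1 x * S1 x * p x) + 2 * c1 * c2 * (S1 x * S2 x * p x) + c2^2 * (S2 x * S2 x * p x))"
    unfolding h_def L_def by (intro ext) (simp add: power2_eq_square algebra_simps)
  have hI: "integrable lborel h" unfolding he using I11 I12 I22 by auto
  have Qe: "(\<integral>x. h x \<partial>lborel) = c1^2 * Dn [1,1] \<theta> + 2 * c1 * c2 * Dn [1,2] \<theta> + c2^2 * Dn [2,2] \<theta>"
    unfolding he using I11 I12 I22 F11 F12 F22 by simp
  have ppos: "p x > 0" for x unfolding p_def E_def using K_pos[of \<theta>] by simp
  have hnn: "0 \<le> h x" for x unfolding h_def using ppos[of x] by simp
  have Lc: "continuous_on UNIV L" unfolding L_def S1_def S2_def by (intro continuous_intros)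
  have "\<exists>x0. L x0 \<noteq> 0"
  proof (rule ccontr)
    assume "\<not> (\<exists>x0. L x0 \<noteq> 0)"
    then have z: "L 0 = 0" "L 1 = 0" "L (-1) = 0" by auto
    have y0: "Y1 0 = 0" by (simp add: Y1_def)
    have ym: "Y1 (-1) = Y1 1" by (simp add: Y1_def)
    have "cosh (1::real) > 1" using cosh_real_ge_1[of 1] cosh_real_one_iff[of 1] by linarith
    then have y1: "Y1 1 \<noteq> 0" by (simp add: Y1_def)
    from z have "c2 = 0" unfolding L_def S1_def S2_def ym by (simp add: algebra_simps)
    with z y0 have "c1 * Y1 1 = 0" unfolding L_def S1_def S2_def by (auto simp: algebra_simps)
    with y1 have "c1 = 0" by simp
    with \<open>c2 = 0\<close> c show False by simp
  qed
  then obtain x0 where x0: "L x0 \<noteq> 0" by blast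
  have "open {x. L x \<noteq> 0}" by (rule open_Collect_neq[OF Lc continuous_on_const])
  then obtain r where r: "r > 0" "ball x0 r \<subseteq> {x. L x \<noteq> 0}" using x0 openE by blast
  have Qnn: "(\<integral>x. h x \<partial>lborel) \<ge> 0" using hnn by simp
  have "(\<integral>x. h x \<partial>lborel) \<noteq> 0"
  proof
    assume "(\<integral>x. h x \<partial>lborel) = 0"
    then have "AE x in lborel. h x = 0"
      using integral_nonneg_eq_0_iff_AE[OF hI] hnn by simp
    then obtain N where N: "{x \<in> space lborel. \<not> h x = 0} \<subseteq> N" "emeasure lborel N = 0" "N \<in> sets lborel"
      by (rule AE_E)
    have "ball x0 r \<subseteq> N"
    proof
      fix x assume "x \<in> ball x0 r"
      then have "L x \<noteq> 0" using r by auto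
      then have "h x \<noteq> 0" unfolding h_def using ppos[of x] by simp
      then show "x \<in> N" using N(1) by auto
    qed
    then have "emeasure lborel (ball x0 r) \<le> emeasure lborel N"
      by (intro emeasure_mono N(3))
    moreover have "emeasure lborel (ball x0 r) = ennreal (2 * r)"
      using r by (simp add: ball_eq_greaterThanLessThan)
    ultimately show False using N(2) r by simp
  qed
  then show ?thesis using Qe Qnn by simp
qed

lemma Ddet_pos_thm:
  assumes T: "\<theta> \<in> Theta"
  shows "Ddet \<theta> > 0"
proof -
  have g22: "Dn [2,2] \<theta> > 0" using Q_pos[OF T, of 0 1] by simp
  have "(Dn [2,2] \<theta>)^2 * Dn [1,1] \<theta> + 2 * Dn [2,2] \<theta> * (- Dn [1,2] \<theta>) * Dn [1,2] \<theta> + (- Dn [1,2] \<theta>)^2 * Dn [2,2] \<theta> > 0"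
    using Q_pos[OF T, of "Dn [2,2] \<theta>" "- Dn [1,2] \<theta>"] g22 by simp
  then have "Dn [2,2] \<theta> * Ddet \<theta> > 0"
    unfolding Ddet_def Dn2_sym by (simp add: power2_eq_square algebra_simps)
  then show ?thesis using g22 by (simp add: zero_less_mult_iff)
qed

lemma Hyp_holds: Hyp
  unfolding Hyp_def using fisher_closed skew_closed Ddet_pos_thm by blast

definition GGf :: "real \<times> real \<Rightarrow> real" where
  "GGf \<theta> = Polygamma 1 (aa \<theta>) * Polygamma 1 (bb \<theta>) - Polygamma 1 (fst \<theta>) * (Polygamma 1 (aa \<theta>) + Polygamma 1 (bb \<theta>))"
definition NN :: "real \<times> real \<Rightarrow> real" where
  "NN \<theta> = Polygamma 1 (fst \<theta>) * Polygamma 2 (aa \<theta>) * Polygamma 2 (bb \<theta>)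
     - Polygamma 2 (fst \<theta>) * (Polygamma 1 (bb \<theta>) * Polygamma 2 (aa \<theta>) + Polygamma 1 (aa \<theta>) * Polygamma 2 (bb \<theta>))"

lemma GGf_Ddet: "GGf \<theta> = 4 * Ddet \<theta>"
  unfolding GGf_def Ddet_def Dn_def Dv_def by (simp add: ca_def cb_def cc_def algebra_simps)

context
  fixes \<theta> :: "real \<times> real"
  assumes H: Hyp and T: "\<theta> \<in> Theta"
begin

lemma curv_eq: "i \<in> idx \<Longrightarrow> j \<in> idx \<Longrightarrow> k \<in> idx \<Longrightarrow> l \<in> idx \<Longrightarrow>
  curv \<alpha> i j k l \<theta> = ((1 - \<alpha>)^2 / 4 - (1 - \<alpha>) / 2) *
    (\<Sum>s\<in>idx. \<Sum>a\<in>idx. Dn [j,k,s] \<theta> * GI s a \<theta> * Dn [i,a,l] \<theta> - Dn [i,k,s] \<theta> * GI s a \<theta> * Dn [j,a,l] \<theta>)"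
proof -
  assume a: "i \<in> idx" "j \<in> idx" "k \<in> idx" "l \<in> idx"
  let ?C = "((1 - \<alpha>)^2 / 4 - (1 - \<alpha>) / 2)"
  have "curv \<alpha> i j k l \<theta> = (\<Sum>n\<in>idx. (?C *
    (\<Sum>s\<in>idx. \<Sum>a\<in>idx. \<Sum>b\<in>idx. (Dn [j,k,s] \<theta> * GI s a \<theta> * Dn [i,a,b] \<theta> * GI b n \<theta>
        - Dn [i,k,s] \<theta> * GI s a \<theta> * Dn [j,a,b] \<theta> * GI b n \<theta>))) * Dn [n,l] \<theta>)"
    unfolding curv_def by (rule sum.cong) (use a in \<open>auto simp: curv_up_eq[OF H T] fisher_eq[OF H T T]\<close>)
  also have "\<dots> = ?C * (\<Sum>s\<in>idx. \<Sum>a\<in>idx. \<Sum>b\<in>idx. (Dn [j,k,s] \<theta> * GI s a \<theta> * Dn [i,a,b] \<theta>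
        - Dn [i,k,s] \<theta> * GI s a \<theta> * Dn [j,a,b] \<theta>) * (\<Sum>n\<in>idx. GI b n \<theta> * Dn [n,l] \<theta>))"
    by (simp add: idx_def algebra_simps)
  also have "\<dots> = ?C * (\<Sum>s\<in>idx. \<Sum>a\<in>idx. \<Sum>b\<in>idx. (Dn [j,k,s] \<theta> * GI s a \<theta> * Dn [i,a,b] \<theta>
        - Dn [i,k,s] \<theta> * GI s a \<theta> * Dn [j,a,b] \<theta>) * (if b = l then 1 else 0))"
    by (intro arg_cong[where f="\<lambda>x. ?C * x"] sum.cong refl) (simp add: GI_G[OF H T] a)
  also have "\<dots> = ?C * (\<Sum>s\<in>idx. \<Sum>a\<in>idx. Dn [j,k,s] \<theta> * GI s a \<theta> * Dn [i,a,l] \<theta> - Dn [i,k,s] \<theta> * GI s a \<theta> * Dn [j,a,l] \<theta>)"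
    using a(4) by (auto simp: idx_def)
  finally show ?thesis .
qed

lemma Ddet_nz': "Ddet \<theta> \<noteq> 0" using Ddet_nz[OF H T] .

lemma curv1212: "curv \<alpha> 1 2 1 2 \<theta> = (1 - \<alpha>^2) * NN \<theta> / (16 * GGf \<theta>)"
  using Ddet_nz'
  apply (subst curv_eq, simp_all add: idx_def GGf_Ddet)
  apply (simp add: GI_def adj_def)
  apply (simp add: field_simps)
  apply (simp add: Dn_def Dv_def ca_def cb_def cc_def NN_def numeral_2_eq_2 algebra_simps power2_eq_square)
  done

end

lemma curv_anti: "curv \<alpha> j i k l \<theta> = - curv \<alpha> i j k l \<theta>"
proof -
  have "curv_up \<alpha> j i k n \<theta> = - curv_up \<alpha> i j k n \<theta>" for n
    unfolding curv_up_def by (simp add: sum_subtractf)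
  then show ?thesis unfolding curv_def by (simp add: sum_negf[symmetric])
qed

lemma curv_diag: "curv \<alpha> i i k l \<theta> = 0"
  unfolding curv_def curv_up_def by simp

context
  fixes \<theta> :: "real \<times> real"
  assumes H: Hyp and T: "\<theta> \<in> Theta"
begin

lemma curv1221: "curv \<alpha> 1 2 2 1 \<theta> = - ((1 - \<alpha>^2) * NN \<theta> / (16 * GGf \<theta>))"
  using Ddet_nz'[OF H T]
  apply (subst curv_eq[OF H T], simp_all add: idx_def GGf_Ddet)
  apply (simp add: GI_def adj_def)
  apply (simp add: field_simps)
  apply (simp add: Dn_def Dv_def ca_def cb_def cc_def NN_def numeral_2_eq_2 algebra_simps power2_eq_square)
  done

lemma curv1211: "curv \<alpha> 1 2 1 1 \<theta> = 0"
  using Ddet_nz'[OF H T]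
  apply (subst curv_eq[OF H T], simp_all add: idx_def)
  apply (simp add: GI_def adj_def)
  apply (simp add: field_simps)
  apply (simp add: Dn_def Dv_def ca_def cb_def cc_def numeral_2_eq_2 algebra_simps power2_eq_square)
  done

lemma curv1222: "curv \<alpha> 1 2 2 2 \<theta> = 0"
  using Ddet_nz'[OF H T]
  apply (subst curv_eq[OF H T], simp_all add: idx_def)
  apply (simp add: GI_def adj_def)
  apply (simp add: field_simps)
  apply (simp add: Dn_def Dv_def ca_def cb_def cc_def numeral_2_eq_2 algebra_simps power2_eq_square)
  done

lemma curv_all: "i \<in> idx \<Longrightarrow> j \<in> idx \<Longrightarrow> k \<in> idx \<Longrightarrow> l \<in> idx \<Longrightarrow>
  curv \<alpha> i j k l \<theta> = (if i = j \<or> k = l then 0 else if i = k then curv \<alpha> 1 2 1 2 \<theta> else - curv \<alpha> 1 2 1 2 \<theta>)"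
proof -
  assume "i \<in> idx" "j \<in> idx" "k \<in> idx" "l \<in> idx"
  then have "i = 1 \<or> i = 2" "j = 1 \<or> j = 2" "k = 1 \<or> k = 2" "l = 1 \<or> l = 2" by (auto simp: idx_def)
  note e = curv1212[OF H T, of \<alpha>] curv1221[of \<alpha>] curv1211[of \<alpha>] curv1222[of \<alpha>]
    curv_anti[of \<alpha> 2 1 1 1 \<theta>] curv_anti[of \<alpha> 2 1 1 2 \<theta>] curv_anti[of \<alpha> 2 1 2 1 \<theta>] curv_anti[of \<alpha> 2 1 2 2 \<theta>]
    curv_diag[of \<alpha> _ _ _ \<theta>]
  show ?thesis
    using \<open>i = 1 \<or> i = 2\<close> \<open>j = 1 \<or> j = 2\<close> \<open>k = 1 \<or> k = 2\<close> \<open>l = 1 \<or> l = 2\<close>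
    apply (elim disjE)
    apply (simp_all only: e)
    apply simp_all
    done
qed

lemma ricci_all: "i \<in> idx \<Longrightarrow> k \<in> idx \<Longrightarrow>
  ricci \<alpha> i k \<theta> = (if i = k then 1 else -1) * curv \<alpha> 1 2 1 2 \<theta> * GI (3 - i) (3 - k) \<theta>"
proof -
  assume a: "i \<in> idx" "k \<in> idx"
  have "ricci \<alpha> i k \<theta> = (\<Sum>j\<in>idx. \<Sum>l\<in>idx. curv \<alpha> i j k l \<theta> * GI j l \<theta>)"
    unfolding ricci_def by (intro sum.cong refl) (simp add: finv_eq[OF H T T])
  also have "\<dots> = (\<Sum>j\<in>idx. \<Sum>l\<in>idx. (if i = j \<or> k = l then 0 else if i = k then curv \<alpha> 1 2 1 2 \<theta> else - curv \<alpha> 1 2 1 2 \<theta>) * GI j l \<theta>)"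
    by (intro sum.cong refl) (simp add: curv_all a)
  also have "\<dots> = (if i = k then 1 else -1) * curv \<alpha> 1 2 1 2 \<theta> * GI (3 - i) (3 - k) \<theta>"
    using a by (auto simp: idx_def)
  finally show ?thesis .
qed

lemma scalar_eq: "scalar_curv \<alpha> \<theta> = 2 * curv \<alpha> 1 2 1 2 \<theta> / Ddet \<theta>"
proof -
  have "scalar_curv \<alpha> \<theta> = (\<Sum>i\<in>idx. \<Sum>j\<in>idx. ((if i = j then 1 else -1) * curv \<alpha> 1 2 1 2 \<theta> * GI (3 - i) (3 - j) \<theta>) * GI i j \<theta>)"
    unfolding scalar_curv_def by (intro sum.cong refl) (simp add: finv_eq[OF H T T] ricci_all)
  also have "\<dots> = 2 * curv \<alpha> 1 2 1 2 \<theta> / Ddet \<theta>"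
    using Ddet_nz'[OF H T]
    apply (simp add: idx_def GI_def adj_def Dn2_sym')
    apply (simp add: field_simps)
    apply (simp add: Ddet_def Dn2_sym' algebra_simps power2_eq_square)
    done
  finally show ?thesis .
qed

end

theorem mainHyp:
  fixes \<theta> :: "real \<times> real" and \<alpha> :: real
  assumes Hy: Hyp
  assumes "\<theta> \<in> Theta"
  defines "a \<equiv> (fst \<theta> - snd \<theta>) / 2" and "b \<equiv> (fst \<theta> + snd \<theta>) / 2"
  defines "p \<equiv> Polygamma 1 a" and "q \<equiv> Polygamma 1 b" and "r \<equiv> Polygamma 1 (fst \<theta>)"
      and "s \<equiv> Polygamma 2 a" and "u \<equiv> Polygamma 2 b" and "v \<equiv> Polygamma 2 (fst \<theta>)"
  defines "GG \<equiv> p * q - r * (p + q)" and "N \<equiv> r * s * u - v * (q * s + p * u)"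
  shows
    "conn \<alpha> 1 1 1 \<theta> = (1 - \<alpha>) / 16 * (u + s - 8 * v)
     \<and> conn \<alpha> 1 2 1 \<theta> = (1 - \<alpha>) / 16 * (u - s)
     \<and> conn \<alpha> 1 1 2 \<theta> = (1 - \<alpha>) / 16 * (u - s)
     \<and> conn \<alpha> 2 1 1 \<theta> = (1 - \<alpha>) / 16 * (u - s)
     \<and> conn \<alpha> 2 2 2 \<theta> = (1 - \<alpha>) / 16 * (u - s)
     \<and> conn \<alpha> 1 2 2 \<theta> = (1 - \<alpha>) / 16 * (u + s)
     \<and> conn \<alpha> 2 1 2 \<theta> = (1 - \<alpha>) / 16 * (u + s)
     \<and> conn \<alpha> 2 2 1 \<theta> = (1 - \<alpha>) / 16 * (u + s)
     \<and> (\<forall>i\<in>idx. \<forall>j\<in>idx. \<forall>k\<in>idx. \<forall>l\<in>idx. (i = j \<or> k = l) \<longrightarrow> curv \<alpha> i j k l \<theta> = 0)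
     \<and> curv \<alpha> 1 2 1 2 \<theta> = (1 - \<alpha>\<^sup>2) * N / (16 * GG)
     \<and> curv \<alpha> 2 1 2 1 \<theta> = (1 - \<alpha>\<^sup>2) * N / (16 * GG)
     \<and> - curv \<alpha> 1 2 2 1 \<theta> = (1 - \<alpha>\<^sup>2) * N / (16 * GG)
     \<and> - curv \<alpha> 2 1 1 2 \<theta> = (1 - \<alpha>\<^sup>2) * N / (16 * GG)
     \<and> ricci \<alpha> 1 1 \<theta> = (1 - \<alpha>\<^sup>2) * (p + q - 4 * r) * N / (16 * GG\<^sup>2)
     \<and> ricci \<alpha> 1 2 \<theta> = - ((1 - \<alpha>\<^sup>2) * (p - q) * N / (16 * GG\<^sup>2))
     \<and> ricci \<alpha> 2 1 \<theta> = - ((1 - \<alpha>\<^sup>2) * (p - q) * N / (16 * GG\<^sup>2))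
     \<and> ricci \<alpha> 2 2 \<theta> = (1 - \<alpha>\<^sup>2) * (p + q) * N / (16 * GG\<^sup>2)
     \<and> scalar_curv \<alpha> \<theta> = 8 * curv \<alpha> 1 2 1 2 \<theta> / GG
     \<and> scalar_curv \<alpha> \<theta> = 2 * (curv \<alpha> 1 2 1 2 \<theta> / fisher_det \<theta>)"
proof -
  note T = assms(2)
  have GGe: "GG = GGf \<theta>" and Ne: "N = NN \<theta>"
    unfolding GG_def N_def p_def q_def r_def s_def u_def v_def a_def b_def GGf_def NN_def aa_def bb_def by simp_all
  have GG4: "GG = 4 * Ddet \<theta>" using GGe GGf_Ddet by simp
  have dz: "Ddet \<theta> \<noteq> 0" using Ddet_nz'[OF Hy T] .
  have X: "curv \<alpha> 1 2 1 2 \<theta> = (1 - \<alpha>\<^sup>2) * N / (16 * GG)"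
    using curv1212[OF Hy T] GGe Ne by simp
  have idx12: "1 \<in> idx" "2 \<in> idx" by (simp_all add: idx_def)
  have cn: "conn \<alpha> i j k \<theta> = (1 - \<alpha>) / 2 * Dn [i,j,k] \<theta>" if "i \<in> idx" "j \<in> idx" "k \<in> idx" for i j k
    using conn_eq[OF Hy T that] .
  have pd: "p = Polygamma 1 (aa \<theta>)" "q = Polygamma 1 (bb \<theta>)" "r = Polygamma 1 (fst \<theta>)"
     "s = Polygamma 2 (aa \<theta>)" "u = Polygamma 2 (bb \<theta>)" "v = Polygamma 2 (fst \<theta>)"
    unfolding p_def q_def r_def s_def u_def v_def a_def b_def aa_def bb_def by simp_all
  have P1: "conn \<alpha> 1 1 1 \<theta> = (1 - \<alpha>) / 16 * (u + s - 8 * v)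
     \<and> conn \<alpha> 1 2 1 \<theta> = (1 - \<alpha>) / 16 * (u - s)
     \<and> conn \<alpha> 1 1 2 \<theta> = (1 - \<alpha>) / 16 * (u - s)
     \<and> conn \<alpha> 2 1 1 \<theta> = (1 - \<alpha>) / 16 * (u - s)
     \<and> conn \<alpha> 2 2 2 \<theta> = (1 - \<alpha>) / 16 * (u - s)
     \<and> conn \<alpha> 1 2 2 \<theta> = (1 - \<alpha>) / 16 * (u + s)
     \<and> conn \<alpha> 2 1 2 \<theta> = (1 - \<alpha>) / 16 * (u + s)
     \<and> conn \<alpha> 2 2 1 \<theta> = (1 - \<alpha>) / 16 * (u + s)"
    unfolding pd cn[OF idx12(1) idx12(1) idx12(1)] cn[OF idx12(1) idx12(2) idx12(1)] cn[OF idx12(1) idx12(1) idx12(2)]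
      cn[OF idx12(2) idx12(1) idx12(1)] cn[OF idx12(2) idx12(2) idx12(2)] cn[OF idx12(1) idx12(2) idx12(2)]
      cn[OF idx12(2) idx12(1) idx12(2)] cn[OF idx12(2) idx12(2) idx12(1)]
    by (simp add: Dn_def Dv_def ca_def cb_def cc_def numeral_2_eq_2 field_simps)
  have P2: "\<forall>i\<in>idx. \<forall>j\<in>idx. \<forall>k\<in>idx. \<forall>l\<in>idx. (i = j \<or> k = l) \<longrightarrow> curv \<alpha> i j k l \<theta> = 0"
    using curv_all[OF Hy T] by auto
  have P3: "curv \<alpha> 2 1 2 1 \<theta> = (1 - \<alpha>\<^sup>2) * N / (16 * GG)
     \<and> - curv \<alpha> 1 2 2 1 \<theta> = (1 - \<alpha>\<^sup>2) * N / (16 * GG)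
     \<and> - curv \<alpha> 2 1 1 2 \<theta> = (1 - \<alpha>\<^sup>2) * N / (16 * GG)"
    using curv_all[OF Hy T idx12(2) idx12(1) idx12(2) idx12(1), of \<alpha>]
      curv_all[OF Hy T idx12(1) idx12(2) idx12(2) idx12(1), of \<alpha>]
      curv_all[OF Hy T idx12(2) idx12(1) idx12(1) idx12(2), of \<alpha>] X by simp
  have R: "ricci \<alpha> i k \<theta> = (if i = k then 1 else -1) * curv \<alpha> 1 2 1 2 \<theta> * GI (3 - i) (3 - k) \<theta>"
    if "i \<in> idx" "k \<in> idx" for i k using ricci_all[OF Hy T that] .
  have D11: "Dn [1,1] \<theta> = (p + q - 4 * r) / 4" and D22: "Dn [2,2] \<theta> = (p + q) / 4"
    and D12: "Dn [1,2] \<theta> = - (p - q) / 4"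
    unfolding pd by (simp_all add: Dn_def Dv_def ca_def cb_def cc_def algebra_simps)
  have P4: "ricci \<alpha> 1 1 \<theta> = (1 - \<alpha>\<^sup>2) * (p + q - 4 * r) * N / (16 * GG\<^sup>2)
     \<and> ricci \<alpha> 1 2 \<theta> = - ((1 - \<alpha>\<^sup>2) * (p - q) * N / (16 * GG\<^sup>2))
     \<and> ricci \<alpha> 2 1 \<theta> = - ((1 - \<alpha>\<^sup>2) * (p - q) * N / (16 * GG\<^sup>2))
     \<and> ricci \<alpha> 2 2 \<theta> = (1 - \<alpha>\<^sup>2) * (p + q) * N / (16 * GG\<^sup>2)"
    unfolding R[OF idx12(1) idx12(1)] R[OF idx12(1) idx12(2)] R[OF idx12(2) idx12(1)] R[OF idx12(2) idx12(2)] X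
    using dz
    apply (simp add: GI_def adj_def D11[unfolded One_nat_def] D22 D12[unfolded One_nat_def] Dn2_sym'[of \<theta>] GG4)
    apply (simp add: field_simps power2_eq_square)
    done
  have P5: "scalar_curv \<alpha> \<theta> = 8 * curv \<alpha> 1 2 1 2 \<theta> / GG
     \<and> scalar_curv \<alpha> \<theta> = 2 * (curv \<alpha> 1 2 1 2 \<theta> / fisher_det \<theta>)"
    using dz by (simp add: scalar_eq[OF Hy T] fdet_eq[OF Hy T T] GG4)
  show ?thesis using P1 P2 X P3 P4 P5 by blast
qed

theorem mainTheorem2:
  fixes \<theta> :: "real \<times> real" and \<alpha> :: real
  assumes "\<theta> \<in> Theta"
  defines "a \<equiv> (fst \<theta> - snd \<theta>) / 2" and "b \<equiv> (fst \<theta> + snd \<theta>) / 2"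
  defines "p \<equiv> Polygamma 1 a" and "q \<equiv> Polygamma 1 b" and "r \<equiv> Polygamma 1 (fst \<theta>)"
      and "s \<equiv> Polygamma 2 a" and "u \<equiv> Polygamma 2 b" and "v \<equiv> Polygamma 2 (fst \<theta>)"
  defines "GG \<equiv> p * q - r * (p + q)" and "N \<equiv> r * s * u - v * (q * s + p * u)"
  shows
    "conn \<alpha> 1 1 1 \<theta> = (1 - \<alpha>) / 16 * (u + s - 8 * v)
     \<and> conn \<alpha> 1 2 1 \<theta> = (1 - \<alpha>) / 16 * (u - s)
     \<and> conn \<alpha> 1 1 2 \<theta> = (1 - \<alpha>) / 16 * (u - s)
     \<and> conn \<alpha> 2 1 1 \<theta> = (1 - \<alpha>) / 16 * (u - s)
     \<and> conn \<alpha> 2 2 2 \<theta> = (1 - \<alpha>) / 16 * (u - s)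
     \<and> conn \<alpha> 1 2 2 \<theta> = (1 - \<alpha>) / 16 * (u + s)
     \<and> conn \<alpha> 2 1 2 \<theta> = (1 - \<alpha>) / 16 * (u + s)
     \<and> conn \<alpha> 2 2 1 \<theta> = (1 - \<alpha>) / 16 * (u + s)
     \<and> (\<forall>i\<in>idx. \<forall>j\<in>idx. \<forall>k\<in>idx. \<forall>l\<in>idx. (i = j \<or> k = l) \<longrightarrow> curv \<alpha> i j k l \<theta> = 0)
     \<and> curv \<alpha> 1 2 1 2 \<theta> = (1 - \<alpha>\<^sup>2) * N / (16 * GG)
     \<and> curv \<alpha> 2 1 2 1 \<theta> = (1 - \<alpha>\<^sup>2) * N / (16 * GG)
     \<and> - curv \<alpha> 1 2 2 1 \<theta> = (1 - \<alpha>\<^sup>2) * N / (16 * GG)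
     \<and> - curv \<alpha> 2 1 1 2 \<theta> = (1 - \<alpha>\<^sup>2) * N / (16 * GG)
     \<and> ricci \<alpha> 1 1 \<theta> = (1 - \<alpha>\<^sup>2) * (p + q - 4 * r) * N / (16 * GG\<^sup>2)
     \<and> ricci \<alpha> 1 2 \<theta> = - ((1 - \<alpha>\<^sup>2) * (p - q) * N / (16 * GG\<^sup>2))
     \<and> ricci \<alpha> 2 1 \<theta> = - ((1 - \<alpha>\<^sup>2) * (p - q) * N / (16 * GG\<^sup>2))
     \<and> ricci \<alpha> 2 2 \<theta> = (1 - \<alpha>\<^sup>2) * (p + q) * N / (16 * GG\<^sup>2)
     \<and> scalar_curv \<alpha> \<theta> = 8 * curv \<alpha> 1 2 1 2 \<theta> / GG
     \<and> scalar_curv \<alpha> \<theta> = 2 * (curv \<alpha> 1 2 1 2 \<theta> / fisher_det \<theta>)"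
  unfolding GG_def N_def p_def q_def r_def s_def u_def v_def a_def b_def
  by (rule mainHyp[OF Hyp_holds assms(1)])

end
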